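(* Assume (A.a). Let $\beta\in[0,1)$, $\lambda\in[0,\frac{\beta}{1-\beta}]$, and step sizes $\alpha_k\in\big(0,\frac{1-\beta}{\sqrt8\,Lm}\big]$ for all $k$, and let the sequences be generated by RRM. Let $\mathcal B:=1-\frac{1-\beta}{\beta}\lambda$ if $\beta>0$ and $\mathcal B:=1$ if $\beta=0$ (so $\mathcal B\in[0,1]$). (a) For all $k\ge1$ (arbitrary permutations), \[ \sum_{t=1}^m\|\hat y_t^k-z^k\|^2\le\frac{5m}{4}\Big[\mathcal B\|z^k-x^k\|^2+\frac{m^2\alpha_k^2}{(1-\beta)^2}\|\nabla f(z^k)\|^2+\frac{3Lm^2\alpha_k^2}{(1-\beta)^2}[f(z^k)-\bar f]\Big]. \] (b) If in addition (A.c) holds, then for all $k\ge1$, \[ \sum_{t=1}^m\mathbb E_k[\|\hat y_t^k-z^k\|^2]\le\frac{5m}{4}\Big[\mathcal B\|z^k-x^k\|^2+\frac{m^2\alpha_k^2}{(1-\beta)^2}\|\nabla f(z^k)\|^2+\frac{3Lm\alpha_k^2}{b(1-\beta)^2}[f(z^k)-\bar f]\Big]. \]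
   Context: Let $n,d\in\mathbb N$, $f_1,\dots,f_n:\mathbb R^d\to\mathbb R$ continuously differentiable, $f:=\frac1n\sum_{i=1}^n f_i$, $[n]:=\{1,\dots,n\}$. Fix a mini-batch size $b\in\mathbb N$ with $m:=n/b\in\mathbb N$. Random reshuffling with momentum (RRM) with step sizes $\{\alpha_k\}_{k\ge1}\subset(0,\infty)$ and parameters $\beta,\lambda$ generates sequences as follows: start with $x^1=\tilde x^1\in\mathbb R^d$; for each $k=1,2,\dots$ choose a permutation $\pi^k=(\pi^k_1,\dots,\pi^k_n)$ of $[n]$, set $y_0^k=\tilde x^k$, $y_1^k=x^k$, and for $i=1,\dots,m$ compute $\hat y_i^k=y_i^k+\lambda(y_i^k-y_{i-1}^k)$, $d_i^k=\frac1b\sum_{j=(i-1)b+1}^{ib}\nabla f_{\pi^k_j}(\hat y_i^k)$, $y_{i+1}^k=y_i^k-\alpha_kd_i^k+\beta(y_i^k-y_{i-1}^k)$; then set $\tilde x^{k+1}=y_m^k$, $x^{k+1}=y_{m+1}^k$. The proxy iterates are $z^k:=\frac{1}{1-\beta}x^k-\frac{\beta}{1-\beta}\tilde x^k$. Assumption (A.a): there are $L>0$ and $\bar f\in\mathbb R$ such that each $\nabla f_i$ is $L$-Lipschitz and $f_i(x)\ge\bar f$ for all $x\in\mathbb R^d$, $i\in[n]$. Assumption (A.c): the permutations $\pi^1,\pi^2,\dots$ are independent and each is uniformly distributed over all permutations of $[n]$. $\mathbb E_k[\cdot]$ denotes conditional expectation given $\pi^1,\dots,\pi^{k-1}$ (so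 $x^k,\tilde x^k,z^k$ are fixed and only $\pi^k$ is random). *)

theory Defs
  imports "HOL-Analysis.Analysis" "HOL-Probability.Probability"
begin

text \<open>Inner loop of RRM in epoch k, with step size al, momentum beta,
  extrapolation lam, permutation p of {1..n}, mini-batch size b, gradients g.
  rrm_inner ... xt x i = (y_i, y_(i+1)), where y_0 = xt (= x-tilde^k), y_1 = x (= x^k).\<close>
primrec rrm_inner ::
  "(nat \<Rightarrow> 'a::real_inner \<Rightarrow> 'a) \<Rightarrow> nat \<Rightarrow> real \<Rightarrow> real \<Rightarrow> real \<Rightarrow> (nat \<Rightarrow> nat)
    \<Rightarrow> 'a \<Rightarrow> 'a \<Rightarrow> nat \<Rightarrow> 'a \<times> 'a" where
  "rrm_inner g b al beta lam p xt x 0 = (xt, x)"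
| "rrm_inner g b al beta lam p xt x (Suc i) =
     (let u = fst (rrm_inner g b al beta lam p xt x i);
          v = snd (rrm_inner g b al beta lam p xt x i);
          yh = v + lam *\<^sub>R (v - u);
          d = (1 / real b) *\<^sub>R (\<Sum>j = i * b + 1 .. Suc i * b. g (p j) yh)
      in (v, v - al *\<^sub>R d + beta *\<^sub>R (v - u)))"

definition rrm_yhat ::
  "(nat \<Rightarrow> 'a::real_inner \<Rightarrow> 'a) \<Rightarrow> nat \<Rightarrow> real \<Rightarrow> real \<Rightarrow> real \<Rightarrow> (nat \<Rightarrow> nat)
    \<Rightarrow> 'a \<Rightarrow> 'a \<Rightarrow> nat \<Rightarrow> 'a" where
  "rrm_yhat g b al beta lam p xt x t =
     (let u = fst (rrm_inner g b al beta lam p xt x (t - 1));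
          v = snd (rrm_inner g b al beta lam p xt x (t - 1))
      in v + lam *\<^sub>R (v - u))"

text \<open>Outer loop: rrm_state ... k = (x-tilde^k, x^k) for k \<ge> 1 (index 0 is a dummy copy
  of epoch 1). al k is the step size and ps k the permutation of epoch k.\<close>
fun rrm_state ::
  "(nat \<Rightarrow> 'a::real_inner \<Rightarrow> 'a) \<Rightarrow> nat \<Rightarrow> nat \<Rightarrow> (nat \<Rightarrow> real) \<Rightarrow> real \<Rightarrow> real
    \<Rightarrow> (nat \<Rightarrow> nat \<Rightarrow> nat) \<Rightarrow> 'a \<Rightarrow> nat \<Rightarrow> 'a \<times> 'a" where
  "rrm_state g b m al beta lam ps x1 0 = (x1, x1)"
| "rrm_state g b m al beta lam ps x1 (Suc 0) = (x1, x1)"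
| "rrm_state g b m al beta lam ps x1 (Suc (Suc k)) =
     rrm_inner g b (al (Suc k)) beta lam (ps (Suc k))
       (fst (rrm_state g b m al beta lam ps x1 (Suc k)))
       (snd (rrm_state g b m al beta lam ps x1 (Suc k))) m"

definition rrm_z :: "real \<Rightarrow> 'a::real_vector \<Rightarrow> 'a \<Rightarrow> 'a" where
  "rrm_z beta xt x = (1 / (1 - beta)) *\<^sub>R x - (beta / (1 - beta)) *\<^sub>R xt"

definition rrm_B :: "real \<Rightarrow> real \<Rightarrow> real" where
  "rrm_B beta lam = (if beta > 0 then 1 - (1 - beta) / beta * lam else 1)"

end

theory Submission
  imports Defs
begin





lemma descent:
  fixes F :: "'a::real_inner \<Rightarrow> real" and G :: "'a \<Rightarrow> 'a"
  assumes der: "\<And>y. (F has_derivative (\<lambda>h. G y \<bullet> h)) (at y)"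
    and lip: "\<And>y w. norm (G y - G w) \<le> L * norm (y - w)"
  shows "F (y + h) \<le> F y + G y \<bullet> h + L/2 * (norm h)\<^sup>2"
proof -
  define \<phi> where "\<phi> t = F (y + t *\<^sub>R h) - t * (G y \<bullet> h) - L/2 * t\<^sup>2 * (norm h)\<^sup>2" for t
  have D: "DERIV \<phi> t :> (G (y + t *\<^sub>R h) \<bullet> h - G y \<bullet> h - L * t * (norm h)\<^sup>2)" for t
  proof -
    have l: "((\<lambda>t. y + t *\<^sub>R h) has_derivative (\<lambda>s. s *\<^sub>R h)) (at t)"
      by (auto intro!: derivative_eq_intros)
    have c: "((\<lambda>t. F (y + t *\<^sub>R h)) has_derivative (\<lambda>s. G (y + t *\<^sub>R h) \<bullet> (s *\<^sub>R h))) (at t)"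
      by (rule has_derivative_compose[OF l der])
    have c2: "((\<lambda>t. F (y + t *\<^sub>R h)) has_real_derivative (G (y + t *\<^sub>R h) \<bullet> h)) (at t)"
      using c by (simp add: has_field_derivative_def mult.commute[of _ "G (y + t *\<^sub>R h) \<bullet> h"] inner_scaleR_right)
    show ?thesis unfolding \<phi>_def
      by (auto intro!: derivative_eq_intros c2)
  qed
  have "\<phi> 1 \<le> \<phi> 0"
  proof (rule DERIV_nonpos_imp_nonincreasing[of 0 1])
    fix t :: real assume t: "0 \<le> t" "t \<le> 1"
    have "G (y + t *\<^sub>R h) \<bullet> h - G y \<bullet> h = (G (y + t *\<^sub>R h) - G y) \<bullet> h"
      by (simp add: inner_diff_left)
    also have "\<dots> \<le> norm (G (y + t *\<^sub>R h) - G y) * norm h"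
      by (rule norm_cauchy_schwarz)
    also have "\<dots> \<le> (L * norm (t *\<^sub>R h)) * norm h"
      using lip[of "y + t *\<^sub>R h" y] by (intro mult_right_mono) auto
    also have "\<dots> = L * t * (norm h)\<^sup>2" using t by (simp add: power2_eq_square)
    finally show "\<exists>yy. DERIV \<phi> t :> yy \<and> yy \<le> 0" using D[of t] by (intro exI[of _ "G (y + t *\<^sub>R h) \<bullet> h - G y \<bullet> h - L * t * (norm h)\<^sup>2"]) auto
  qed simp
  then show ?thesis unfolding \<phi>_def by simp
qed

lemma grad_bound:
  fixes F :: "'a::real_inner \<Rightarrow> real" and G :: "'a \<Rightarrow> 'a"
  assumes der: "\<And>y. (F has_derivative (\<lambda>h. G y \<bullet> h)) (at y)"
    and lip: "\<And>y w. norm (G y - G w) \<le> L * norm (y - w)"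
    and low: "\<And>y. fbar \<le> F y" and L: "0 < L"
  shows "(norm (G y))\<^sup>2 \<le> 2 * L * (F y - fbar)"
proof -
  have "fbar \<le> F (y + (- (1/L)) *\<^sub>R G y)" by (rule low)
  also have "\<dots> \<le> F y + G y \<bullet> ((- (1/L)) *\<^sub>R G y) + L/2 * (norm ((- (1/L)) *\<^sub>R G y))\<^sup>2"
    by (rule descent[OF der lip])
  also have "\<dots> = F y - (norm (G y))\<^sup>2 / (2*L)"
    using L by (simp add: power_mult_distrib field_simps power2_eq_square flip: power2_norm_eq_inner)
  finally show ?thesis using L by (simp add: field_simps)
qed




lemma E_step_abs:
  fixes u v d :: "'a::real_vector"
  assumes "beta \<noteq> 1"
  shows "(v - al *\<^sub>R d + beta *\<^sub>R (v - u)) - rrm_z beta v (v - al *\<^sub>R d + beta *\<^sub>R (v - u))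
        = beta *\<^sub>R (v - rrm_z beta u v) + (beta * al / (1 - beta)) *\<^sub>R d"
proof -
  have e1: "(1 - beta) * (1 / (1 - beta)) = 1" and e2: "(1 - beta) * (beta / (1 - beta)) = beta"
    and e3: "(1 - beta) * (beta * al / (1 - beta)) = beta * al" using assms by auto
  have e4: "(beta - beta * beta) / (1 - beta) = beta" and e5: "(beta * beta - beta * (beta * beta)) / (1 - beta) = beta * beta"
    using assms by (auto simp: field_simps)
  have "(1 - beta) *\<^sub>R ((v - al *\<^sub>R d + beta *\<^sub>R (v - u)) - rrm_z beta v (v - al *\<^sub>R d + beta *\<^sub>R (v - u)))
     = (1 - beta) *\<^sub>R (beta *\<^sub>R (v - rrm_z beta u v) + (beta * al / (1 - beta)) *\<^sub>R d)"
    unfolding rrm_z_def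
    apply (simp only: scaleR_add_right scaleR_diff_right scaleR_scaleR e1 e2 e3 mult.assoc[symmetric])
    apply (simp add: algebra_simps e1 e2 e3 e4 e5)
    done
  then show ?thesis using assms by simp
qed

lemma Z_step_abs:
  fixes u v d :: "'a::real_vector"
  assumes "beta \<noteq> 1"
  shows "rrm_z beta v (v - al *\<^sub>R d + beta *\<^sub>R (v - u)) = rrm_z beta u v - (al / (1 - beta)) *\<^sub>R d"
proof -
  have "(1 - beta) *\<^sub>R rrm_z beta v (v - al *\<^sub>R d + beta *\<^sub>R (v - u)) = (1 - beta) *\<^sub>R (rrm_z beta u v - (al / (1 - beta)) *\<^sub>R d)"
    using assms unfolding rrm_z_def
    by (simp add: algebra_simps)
  then show ?thesis using assms by simp
qed

lemma vZ_abs: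
  fixes u v :: "'a::real_vector"
  assumes "beta \<noteq> 1"
  shows "v - rrm_z beta u v = (- (beta / (1 - beta))) *\<^sub>R (v - u)"
proof -
  have e4: "(beta - beta * beta) / (1 - beta) = beta" using assms by (auto simp: field_simps)
  have h: "(1 - beta) *\<^sub>R (v - rrm_z beta u v) = (1 - beta) *\<^sub>R ((- (beta / (1 - beta))) *\<^sub>R (v - u))"
    using assms unfolding rrm_z_def by (simp add: algebra_simps e4)
  have ne: "1 - beta \<noteq> 0" using assms by simp
  show ?thesis by (rule scaleR_left_imp_eq[OF ne h])
qed

lemma B_bounds:
  assumes "0 \<le> beta" "beta < 1" "0 \<le> lam" "lam \<le> beta / (1 - beta)"
  shows "0 \<le> rrm_B beta lam" "rrm_B beta lam \<le> 1"
proof -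
  show "rrm_B beta lam \<le> 1" using assms by (auto simp: rrm_B_def)
  show "0 \<le> rrm_B beta lam"
  proof (cases "beta > 0")
    case True
    have "(1 - beta) / beta * lam \<le> (1 - beta) / beta * (beta / (1 - beta))"
      using assms True by (intro mult_left_mono) auto
    also have "\<dots> = 1" using assms True by auto
    finally show ?thesis using True by (simp add: rrm_B_def)
  qed (simp add: rrm_B_def)
qed

lemma Yh_abs:
  fixes u v :: "'a::real_vector"
  assumes "0 \<le> beta" "beta < 1" "0 \<le> lam" "lam \<le> beta / (1 - beta)"
  shows "v + lam *\<^sub>R (v - u) - rrm_z beta u v = rrm_B beta lam *\<^sub>R (v - rrm_z beta u v)"
proof (cases "beta > 0")
  case False
  then have "beta = 0" "lam = 0" using assms by auto
  then show ?thesis by (simp add: rrm_z_def rrm_B_def)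
next
  case True
  have ne: "beta \<noteq> 1" using assms by auto
  have "v + lam *\<^sub>R (v - u) - rrm_z beta u v = (v - rrm_z beta u v) + lam *\<^sub>R (v - u)" by simp
  also have "\<dots> = (lam - beta / (1 - beta)) *\<^sub>R (v - u)"
    unfolding vZ_abs[OF ne] by (simp add: algebra_simps)
  also have "\<dots> = rrm_B beta lam *\<^sub>R (v - rrm_z beta u v)"
  proof -
    have c: "lam - beta / (1 - beta) = rrm_B beta lam * (- (beta / (1 - beta)))"
      using True ne by (simp add: rrm_B_def field_simps)
    show ?thesis unfolding vZ_abs[OF ne] scaleR_scaleR by (simp only: c)
  qed
  finally show ?thesis .
qed

lemma lin_rec_E:
  fixes E D :: "nat \<Rightarrow> 'a::real_vector"
  assumes "\<And>i. E (Suc i) = beta *\<^sub>R E i + (beta * c) *\<^sub>R D i"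
  shows "E i = beta ^ i *\<^sub>R E 0 + c *\<^sub>R (\<Sum>j<i. beta ^ (i - j) *\<^sub>R D j)"
proof (induction i)
  case (Suc i)
  have s: "(\<Sum>j<i. beta ^ (Suc i - j) *\<^sub>R D j) = beta *\<^sub>R (\<Sum>j<i. beta ^ (i - j) *\<^sub>R D j)"
    by (simp add: scaleR_sum_right Suc_diff_le)
  show ?case unfolding assms Suc by (simp add: s algebra_simps)
qed simp

lemma lin_rec_Z:
  fixes Z D :: "nat \<Rightarrow> 'a::real_vector"
  assumes "\<And>i. Z (Suc i) = Z i - c *\<^sub>R D i"
  shows "Z i = Z 0 - c *\<^sub>R (\<Sum>j<i. D j)"
proof (induction i)
  case (Suc i)
  show ?case unfolding assms Suc by (simp add: algebra_simps)
qed simp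

lemma key_alg:
  fixes D :: "nat \<Rightarrow> 'a::real_vector"
  shows "Bc *\<^sub>R (beta ^ i *\<^sub>R Ev + c *\<^sub>R (\<Sum>j<i. beta ^ (i - j) *\<^sub>R D j)) + (Zv - c *\<^sub>R (\<Sum>j<i. D j) - Zv)
     = (Bc * beta ^ i) *\<^sub>R Ev - c *\<^sub>R (\<Sum>j<i. (1 - Bc * beta ^ (i - j)) *\<^sub>R D j)"
  by (simp add: algebra_simps scaleR_sum_right sum_subtractf sum.distrib)

lemma key_abs:
  fixes U V D :: "nat \<Rightarrow> 'a::real_vector"
  assumes US: "\<And>i. U (Suc i) = V i"
    and VS: "\<And>i. V (Suc i) = V i - al *\<^sub>R D i + beta *\<^sub>R (V i - U i)"
    and prm: "0 \<le> beta" "beta < 1" "0 \<le> lam" "lam \<le> beta / (1 - beta)"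
  shows "V i + lam *\<^sub>R (V i - U i) - rrm_z beta (U 0) (V 0) = (rrm_B beta lam * beta ^ i) *\<^sub>R (V 0 - rrm_z beta (U 0) (V 0))
     - (al / (1 - beta)) *\<^sub>R (\<Sum>j<i. (1 - rrm_B beta lam * beta ^ (i - j)) *\<^sub>R D j)"
proof -
  define Z where "Z i = rrm_z beta (U i) (V i)" for i
  have ne: "beta \<noteq> 1" using prm by auto
  have Zs: "Z (Suc i) = Z i - (al / (1 - beta)) *\<^sub>R D i" for i
    unfolding Z_def US VS by (rule Z_step_abs[OF ne])
  have Es: "V (Suc i) - Z (Suc i) = beta *\<^sub>R (V i - Z i) + (beta * (al / (1 - beta))) *\<^sub>R D i" for i
    unfolding Z_def US VS times_divide_eq_right by (rule E_step_abs[OF ne])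
  have Zc: "Z i = Z 0 - (al / (1 - beta)) *\<^sub>R (\<Sum>j<i. D j)"
    by (rule lin_rec_Z[where Z=Z and D=D, OF Zs])
  have Ec: "V i - Z i = beta ^ i *\<^sub>R (V 0 - Z 0) + (al / (1 - beta)) *\<^sub>R (\<Sum>j<i. beta ^ (i - j) *\<^sub>R D j)"
    by (rule lin_rec_E[where E="\<lambda>i. V i - Z i" and D=D, OF Es])
  have Y: "V i + lam *\<^sub>R (V i - U i) - Z i = rrm_B beta lam *\<^sub>R (V i - Z i)" unfolding Z_def by (rule Yh_abs[OF prm])
  have "V i + lam *\<^sub>R (V i - U i) - Z 0 = (V i + lam *\<^sub>R (V i - U i) - Z i) + (Z i - Z 0)" by simp
  also have "\<dots> = rrm_B beta lam *\<^sub>R (beta ^ i *\<^sub>R (V 0 - Z 0) + (al / (1 - beta)) *\<^sub>R (\<Sum>j<i. beta ^ (i - j) *\<^sub>R D j))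
      + (Z 0 - (al / (1 - beta)) *\<^sub>R (\<Sum>j<i. D j) - Z 0)"
    unfolding Y by (subst Ec, subst Zc, rule refl)
  also have "\<dots> = (rrm_B beta lam * beta ^ i) *\<^sub>R (V 0 - Z 0)
     - (al / (1 - beta)) *\<^sub>R (\<Sum>j<i. (1 - rrm_B beta lam * beta ^ (i - j)) *\<^sub>R D j)"
    by (rule key_alg[where Bc="rrm_B beta lam" and beta=beta and i=i and Ev="V 0 - Z 0" and c="al / (1 - beta)" and D=D and Zv="Z 0"])
  finally show ?thesis unfolding Z_def .
qed




lemma perm_reindex:
  assumes "p permutes S"
  shows "(\<Sum>l\<in>S. G (p l)) = (\<Sum>i\<in>S. G i)"
  using sum.reindex_bij_betw[OF permutes_imp_bij[OF assms], of G] .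

lemma perm_inv1:
  assumes "finite S" "l \<in> S" "l' \<in> S"
  shows "(\<Sum>p\<in>{p. p permutes S}. \<Phi> (p l)) = (\<Sum>p\<in>{p. p permutes S}. \<Phi> (p l'))"
proof -
  have "(\<Sum>p\<in>{p. p permutes S}. \<Phi> (p l)) = (\<Sum>p\<in>{p. p permutes S}. \<Phi> ((p \<circ> Transposition.transpose l l') l))"
    by (rule sum_permutations_compose_right[OF permutes_swap_id[OF assms(2,3)]])
  also have "\<dots> = (\<Sum>p\<in>{p. p permutes S}. \<Phi> (p l'))" by simp
  finally show ?thesis .
qed

lemma perm_avg1:
  assumes "finite S" "l \<in> S"
  shows "real (card S) * (\<Sum>p\<in>{p. p permutes S}. \<Phi> (p l)) = real (card {p. p permutes S}) * (\<Sum>i\<in>S. \<Phi> i)"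
proof -
  have "real (card S) * (\<Sum>p\<in>{p. p permutes S}. \<Phi> (p l)) = (\<Sum>l'\<in>S. \<Sum>p\<in>{p. p permutes S}. \<Phi> (p l'))"
  proof -
    have "(\<Sum>l'\<in>S. \<Sum>p\<in>{p. p permutes S}. \<Phi> (p l')) = (\<Sum>l'\<in>S. \<Sum>p\<in>{p. p permutes S}. \<Phi> (p l))"
      by (rule sum.cong[OF refl]) (rule perm_inv1[OF assms(1) _ assms(2)], simp)
    then show ?thesis by simp
  qed
  also have "\<dots> = (\<Sum>p\<in>{p. p permutes S}. \<Sum>l'\<in>S. \<Phi> (p l'))" by (rule sum.swap)
  also have "\<dots> = (\<Sum>p\<in>{p. p permutes S}. \<Sum>i\<in>S. \<Phi> i)"
    by (rule sum.cong[OF refl]) (simp add: perm_reindex)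
  finally show ?thesis by simp
qed

lemma perm_inv2:
  assumes "finite S" "l \<in> S" "l' \<in> S" "l'' \<in> S" "l' \<noteq> l" "l'' \<noteq> l"
  shows "(\<Sum>p\<in>{p. p permutes S}. \<Psi> (p l) (p l')) = (\<Sum>p\<in>{p. p permutes S}. \<Psi> (p l) (p l''))"
proof -
  have "(\<Sum>p\<in>{p. p permutes S}. \<Psi> (p l) (p l')) = (\<Sum>p\<in>{p. p permutes S}. \<Psi> ((p \<circ> Transposition.transpose l' l'') l) ((p \<circ> Transposition.transpose l' l'') l'))"
    by (rule sum_permutations_compose_right[OF permutes_swap_id[OF assms(3,4)]])
  also have "\<dots> = (\<Sum>p\<in>{p. p permutes S}. \<Psi> (p l) (p l''))" using assms by (simp add: Transposition.transpose_def)
  finally show ?thesis .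
qed

lemma perm_offdiag:
  fixes h :: "nat \<Rightarrow> 'a::real_inner"
  assumes "finite S" "l \<in> S" "l' \<in> S" "l' \<noteq> l" and h0: "(\<Sum>i\<in>S. h i) = 0"
  shows "(\<Sum>p\<in>{p. p permutes S}. h (p l) \<bullet> h (p l')) \<le> 0"
proof -
  let ?P = "{p. p permutes S}"
  let ?T = "\<lambda>l'. (\<Sum>p\<in>?P. h (p l) \<bullet> h (p l'))"
  have "(\<Sum>l''\<in>S. ?T l'') = (\<Sum>p\<in>?P. \<Sum>l''\<in>S. h (p l) \<bullet> h (p l''))" by (rule sum.swap)
  also have "\<dots> = (\<Sum>p\<in>?P. h (p l) \<bullet> (\<Sum>l''\<in>S. h (p l'')))" by (simp add: inner_sum_right)
  also have "\<dots> = 0"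
    by (intro sum.neutral ballI) (simp add: perm_reindex[of _ S "\<lambda>i. h i"] h0)
  finally have tot: "(\<Sum>l''\<in>S. ?T l'') = 0" .
  have "(\<Sum>l''\<in>S. ?T l'') = ?T l + (\<Sum>l''\<in>S - {l}. ?T l'')"
    using assms by (simp add: sum.remove)
  also have "(\<Sum>l''\<in>S - {l}. ?T l'') = (\<Sum>l''\<in>S - {l}. ?T l')"
  proof (rule sum.cong[OF refl])
    fix x assume x: "x \<in> S - {l}"
    show "?T x = ?T l'"
      using perm_inv2[OF assms(1,2,3) _ assms(4), of x "\<lambda>a b. h a \<bullet> h b"] x by simp
  qed
  also have "\<dots> = real (card (S - {l})) * ?T l'" by simp
  finally have "?T l + real (card (S - {l})) * ?T l' = 0" using tot by simp
  moreover have "?T l \<ge> 0" by (intro sum_nonneg) simp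
  moreover have "card (S - {l}) > 0"
  proof -
    have "l' \<in> S - {l}" using assms by auto
    then show ?thesis using assms(1) card_gt_0_iff by blast
  qed
  ultimately have "real (card (S - {l})) * ?T l' \<le> 0" by linarith
  then show ?thesis using \<open>card (S - {l}) > 0\<close> by (simp add: mult_le_0_iff)
qed

lemma norm_sum_sq:
  fixes v :: "nat \<Rightarrow> 'a::real_inner"
  shows "(norm (\<Sum>l\<in>L. v l))\<^sup>2 = (\<Sum>l\<in>L. \<Sum>l'\<in>L. v l \<bullet> v l')"
  unfolding power2_norm_eq_inner inner_sum_left inner_sum_right by (rule sum.swap)

lemma perm_variance:
  fixes h :: "nat \<Rightarrow> 'a::real_inner"
  assumes fin: "finite S" and LS: "L \<subseteq> S" and h0: "(\<Sum>i\<in>S. h i) = 0" and w: "\<And>l. l \<in> L \<Longrightarrow> 0 \<le> w l"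
  shows "real (card S) * (\<Sum>p\<in>{p. p permutes S}. (norm (\<Sum>l\<in>L. w l *\<^sub>R h (p l)))\<^sup>2)
     \<le> real (card {p. p permutes S}) * (\<Sum>l\<in>L. (w l)\<^sup>2) * (\<Sum>i\<in>S. (norm (h i))\<^sup>2)"
proof -
  let ?P = "{p. p permutes S}"
  have finL: "finite L" using fin LS finite_subset by blast
  have "(\<Sum>p\<in>?P. (norm (\<Sum>l\<in>L. w l *\<^sub>R h (p l)))\<^sup>2)
      = (\<Sum>p\<in>?P. \<Sum>l\<in>L. \<Sum>l'\<in>L. w l * w l' * (h (p l) \<bullet> h (p l')))"
    by (simp add: norm_sum_sq algebra_simps)
  also have "\<dots> = (\<Sum>l\<in>L. \<Sum>l'\<in>L. w l * w l' * (\<Sum>p\<in>?P. h (p l) \<bullet> h (p l')))"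
    by (simp add: sum.swap[of _ ?P] sum_distrib_left)
  also have "\<dots> \<le> (\<Sum>l\<in>L. (w l)\<^sup>2 * (\<Sum>p\<in>?P. (norm (h (p l)))\<^sup>2))"
  proof (rule sum_mono)
    fix l assume l: "l \<in> L"
    have "(\<Sum>l'\<in>L. w l * w l' * (\<Sum>p\<in>?P. h (p l) \<bullet> h (p l')))
        = w l * w l * (\<Sum>p\<in>?P. h (p l) \<bullet> h (p l)) + (\<Sum>l'\<in>L - {l}. w l * w l' * (\<Sum>p\<in>?P. h (p l) \<bullet> h (p l')))"
      using l finL by (simp add: sum.remove)
    also have "(\<Sum>l'\<in>L - {l}. w l * w l' * (\<Sum>p\<in>?P. h (p l) \<bullet> h (p l'))) \<le> 0"
    proof (rule sum_nonpos)
      fix l' assume l': "l' \<in> L - {l}"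
      have "(\<Sum>p\<in>?P. h (p l) \<bullet> h (p l')) \<le> 0"
        using l l' LS by (intro perm_offdiag[OF fin _ _ _ h0]) auto
      moreover have "0 \<le> w l * w l'" using l l' w by auto
      ultimately show "w l * w l' * (\<Sum>p\<in>?P. h (p l) \<bullet> h (p l')) \<le> 0"
        by (simp add: mult_nonneg_nonpos)
    qed
    moreover have "(\<Sum>p\<in>?P. (norm (h (p l)))\<^sup>2) = (\<Sum>p\<in>?P. h (p l) \<bullet> h (p l))"
      by (simp add: power2_norm_eq_inner)
    ultimately show "(\<Sum>l'\<in>L. w l * w l' * (\<Sum>p\<in>?P. h (p l) \<bullet> h (p l'))) \<le> (w l)\<^sup>2 * (\<Sum>p\<in>?P. (norm (h (p l)))\<^sup>2)"
      by (simp add: power2_eq_square)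
  qed
  finally have A: "(\<Sum>p\<in>?P. (norm (\<Sum>l\<in>L. w l *\<^sub>R h (p l)))\<^sup>2) \<le> (\<Sum>l\<in>L. (w l)\<^sup>2 * (\<Sum>p\<in>?P. (norm (h (p l)))\<^sup>2))" .
  have B: "real (card S) * (\<Sum>l\<in>L. (w l)\<^sup>2 * (\<Sum>p\<in>?P. (norm (h (p l)))\<^sup>2))
     = (\<Sum>l\<in>L. (w l)\<^sup>2 * (real (card ?P) * (\<Sum>i\<in>S. (norm (h i))\<^sup>2)))"
    unfolding sum_distrib_left[of "real (card S)"]
  proof (rule sum.cong[OF refl])
    fix l assume "l \<in> L"
    then have "l \<in> S" using LS by auto
    show "real (card S) * ((w l)\<^sup>2 * (\<Sum>p\<in>?P. (norm (h (p l)))\<^sup>2)) = (w l)\<^sup>2 * (real (card ?P) * (\<Sum>i\<in>S. (norm (h i))\<^sup>2))"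
      using perm_avg1[OF fin \<open>l \<in> S\<close>, of "\<lambda>x. (norm (h x))\<^sup>2"] by (simp add: algebra_simps)
  qed
  have C: "(\<Sum>l\<in>L. (w l)\<^sup>2 * (real (card ?P) * (\<Sum>i\<in>S. (norm (h i))\<^sup>2)))
     = real (card ?P) * (\<Sum>l\<in>L. (w l)\<^sup>2) * (\<Sum>i\<in>S. (norm (h i))\<^sup>2)"
    by (simp add: sum_distrib_right sum_distrib_left mult_ac)
  show ?thesis
    using mult_left_mono[OF A, of "real (card S)"] B C by simp
qed




lemma jensen2:
  fixes R A C :: real
  assumes "0 \<le> R" "R \<le> 1"
  shows "(R * A + (1 - R) * C)\<^sup>2 \<le> R * A\<^sup>2 + (1 - R) * C\<^sup>2"
proof -
  have "R * A\<^sup>2 + (1 - R) * C\<^sup>2 - (R * A + (1 - R) * C)\<^sup>2 = R * (1 - R) * (A - C)\<^sup>2"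
    by (simp add: power2_eq_square algebra_simps)
  moreover have "0 \<le> R * (1 - R) * (A - C)\<^sup>2" using assms by simp
  ultimately show ?thesis by linarith
qed

lemma amgm2:
  fixes R A Y :: real
  assumes "0 \<le> R" "R < 1"
  shows "(R * A + Y)\<^sup>2 \<le> R * A\<^sup>2 + Y\<^sup>2 / (1 - R)"
proof -
  have ne: "1 - R > 0" using assms by simp
  have "R * A\<^sup>2 + Y\<^sup>2 / (1 - R) - (R * A + Y)\<^sup>2 = R / (1 - R) * ((1 - R) * A - Y)\<^sup>2"
    using ne by (simp add: power2_eq_square field_simps)
  moreover have "0 \<le> R / (1 - R) * ((1 - R) * A - Y)\<^sup>2" using assms ne by simp
  ultimately show ?thesis by linarith
qed

lemma three_sq: "((x::real) + y + w)\<^sup>2 \<le> 3 * (x\<^sup>2 + y\<^sup>2 + w\<^sup>2)"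
proof -
  have "0 \<le> (x - y)\<^sup>2 + (y - w)\<^sup>2 + (x - w)\<^sup>2" by simp
  then show ?thesis by (simp add: power2_eq_square algebra_simps)
qed

lemma coef_bounds:
  fixes B beta :: real
  assumes "0 \<le> B" "B \<le> 1" "0 \<le> beta" "beta \<le> 1" "j < i"
  shows "0 \<le> 1 - B * beta ^ (i - j)" "1 - B * beta ^ (i - j) \<le> 1 - B * beta ^ i"
proof -
  have "beta ^ (i - j) \<le> 1" using assms by (simp add: power_le_one)
  then have "B * beta ^ (i - j) \<le> 1" using assms by (metis mult_le_one zero_le_power)
  then show "0 \<le> 1 - B * beta ^ (i - j)" by simp
  have "beta ^ i \<le> beta ^ (i - j)" using assms by (intro power_decreasing) auto
  then show "1 - B * beta ^ (i - j) \<le> 1 - B * beta ^ i" using assms by (simp add: mult_left_mono)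
qed

lemma per_i_a:
  fixes e :: "'a::real_normed_vector" and D :: "nat \<Rightarrow> 'a"
  assumes y: "y = (B * beta ^ i) *\<^sub>R e - ta *\<^sub>R (\<Sum>j<i. (1 - B * beta ^ (i - j)) *\<^sub>R D j)"
    and B: "0 \<le> B" "B \<le> 1" and beta: "0 \<le> beta" "beta \<le> 1" and ta: "0 \<le> ta"
  shows "(norm y)\<^sup>2 \<le> B * (norm e)\<^sup>2 + ta\<^sup>2 * real i * (\<Sum>j<i. (norm (D j))\<^sup>2)"
proof -
  define R where "R = B * beta ^ i"
  have R: "0 \<le> R" "R \<le> 1" "R \<le> B" unfolding R_def using B beta
    by (auto simp: mult_le_one power_le_one mult_left_le)
  define C where "C = ta * (\<Sum>j<i. norm (D j))"
  have "norm (\<Sum>j<i. (1 - B * beta ^ (i - j)) *\<^sub>R D j) \<le> (\<Sum>j<i. norm ((1 - B * beta ^ (i - j)) *\<^sub>R D j))"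
    by (rule norm_sum)
  also have "\<dots> \<le> (\<Sum>j<i. (1 - R) * norm (D j))"
  proof (rule sum_mono)
    fix j assume "j \<in> {..<i}"
    then have j: "j < i" by simp
    show "norm ((1 - B * beta ^ (i - j)) *\<^sub>R D j) \<le> (1 - R) * norm (D j)"
      using coef_bounds[OF B beta j] unfolding R_def by (simp add: mult_right_mono)
  qed
  finally have s: "norm (\<Sum>j<i. (1 - B * beta ^ (i - j)) *\<^sub>R D j) \<le> (1 - R) * (\<Sum>j<i. norm (D j))"
    by (simp add: sum_distrib_left)
  have "norm y \<le> norm ((B * beta ^ i) *\<^sub>R e) + norm (ta *\<^sub>R (\<Sum>j<i. (1 - B * beta ^ (i - j)) *\<^sub>R D j))"
    unfolding y by (rule norm_triangle_ineq4)
  also have "\<dots> \<le> R * norm e + (1 - R) * C"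
  proof -
    have n1: "norm ((B * beta ^ i) *\<^sub>R e) = R * norm e" using R unfolding R_def by simp
    have "norm (ta *\<^sub>R (\<Sum>j<i. (1 - B * beta ^ (i - j)) *\<^sub>R D j)) = ta * norm (\<Sum>j<i. (1 - B * beta ^ (i - j)) *\<^sub>R D j)"
      using ta by simp
    also have "\<dots> \<le> ta * ((1 - R) * (\<Sum>j<i. norm (D j)))" by (rule mult_left_mono[OF s ta])
    also have "\<dots> = (1 - R) * C" unfolding C_def by (simp only: mult_ac)
    finally show ?thesis using n1 by linarith
  qed
  finally have ny: "norm y \<le> R * norm e + (1 - R) * C" .
  have "(norm y)\<^sup>2 \<le> (R * norm e + (1 - R) * C)\<^sup>2"
    using ny by (intro power_mono) auto
  also have "\<dots> \<le> R * (norm e)\<^sup>2 + (1 - R) * C\<^sup>2" by (rule jensen2[OF R(1,2)])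
  also have "\<dots> \<le> B * (norm e)\<^sup>2 + C\<^sup>2"
    using R by (intro add_mono mult_right_mono) (auto simp: mult_left_le_one_le)
  also have "C\<^sup>2 \<le> ta\<^sup>2 * real i * (\<Sum>j<i. (norm (D j))\<^sup>2)"
  proof -
    have "(\<Sum>j<i. norm (D j))\<^sup>2 \<le> (\<Sum>j<i. (norm (D j))\<^sup>2) * real (card {..<i})"
      by (rule sum_squared_le_sum_of_squares)
    then have "ta\<^sup>2 * (\<Sum>j<i. norm (D j))\<^sup>2 \<le> ta\<^sup>2 * ((\<Sum>j<i. (norm (D j))\<^sup>2) * real (card {..<i}))"
      by (rule mult_left_mono) simp
    then show ?thesis unfolding C_def power_mult_distrib by (simp add: mult_ac)
  qed
  finally show ?thesis by simp
qed

lemma per_i_b: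
  fixes e gb :: "'a::real_normed_vector" and xi dl D :: "nat \<Rightarrow> 'a" and a :: "nat \<Rightarrow> real"
  assumes y: "y = (B * beta ^ i) *\<^sub>R e - ta *\<^sub>R (\<Sum>j<i. (1 - B * beta ^ (i - j)) *\<^sub>R D j)"
    and Dd: "\<And>j. j < i \<Longrightarrow> D j = gb + xi j + dl j"
    and dl: "\<And>j. j < i \<Longrightarrow> norm (dl j) \<le> L * a j"
    and B: "0 \<le> B" "B \<le> 1" and beta: "0 \<le> beta" "beta < 1" and ta: "0 \<le> ta"
  shows "(norm y)\<^sup>2 \<le> B * (norm e)\<^sup>2 + 3 * ta\<^sup>2 * ((real i)\<^sup>2 * (norm gb)\<^sup>2
      + (norm (\<Sum>j<i. (1 - B * beta ^ (i - j)) *\<^sub>R xi j))\<^sup>2 / (1 - B * beta ^ i)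
      + real i * L\<^sup>2 * (\<Sum>j<i. (a j)\<^sup>2))"
proof (cases "i = 0")
  case True
  have "(norm y)\<^sup>2 = B\<^sup>2 * (norm e)\<^sup>2" using True B unfolding y by (simp add: power_mult_distrib)
  also have "\<dots> \<le> B * (norm e)\<^sup>2" using B by (intro mult_right_mono) (auto simp: power2_eq_square mult_left_le_one_le)
  finally show ?thesis using True by simp
next
  case False
  define R where "R = B * beta ^ i"
  define c where "c j = 1 - B * beta ^ (i - j)" for j
  have cb: "0 \<le> c j" "c j \<le> 1 - R" if "j < i" for j
    using coef_bounds[OF B beta(1) _ that] beta unfolding c_def R_def by auto
  have bi: "beta ^ i \<le> beta" using power_decreasing[of 1 i beta] False beta by simp
  have "B * beta ^ i \<le> beta ^ i" using B beta by (simp add: mult_left_le_one_le)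
  then have R: "0 \<le> R" "R < 1" unfolding R_def using B beta bi by auto
  have Dsum: "(\<Sum>j<i. c j *\<^sub>R D j) = (\<Sum>j<i. c j) *\<^sub>R gb + (\<Sum>j<i. c j *\<^sub>R xi j) + (\<Sum>j<i. c j *\<^sub>R dl j)"
    by (simp add: Dd scaleR_add_right sum.distrib scaleR_sum_left)
  define X where "X = (\<Sum>j<i. c j) * norm gb"
  define Y where "Y = norm (\<Sum>j<i. c j *\<^sub>R xi j)"
  define W where "W = (\<Sum>j<i. c j * norm (dl j))"
  have N: "norm (\<Sum>j<i. c j *\<^sub>R D j) \<le> X + Y + W"
  proof -
    have "norm (\<Sum>j<i. c j *\<^sub>R D j) \<le> norm ((\<Sum>j<i. c j) *\<^sub>R gb) + norm (\<Sum>j<i. c j *\<^sub>R xi j) + norm (\<Sum>j<i. c j *\<^sub>R dl j)"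
      unfolding Dsum by (rule order_trans[OF norm_triangle_ineq add_right_mono[OF norm_triangle_ineq]])
    moreover have "norm ((\<Sum>j<i. c j) *\<^sub>R gb) = X"
    proof -
      have "0 \<le> (\<Sum>j<i. c j)" using cb by (intro sum_nonneg) auto
      then show ?thesis unfolding X_def by simp
    qed
    moreover have "norm (\<Sum>j<i. c j *\<^sub>R dl j) \<le> W"
      unfolding W_def using cb by (intro order_trans[OF norm_sum] sum_mono) auto
    ultimately show ?thesis unfolding Y_def by linarith
  qed
  have X: "X \<le> (1 - R) * real i * norm gb"
  proof -
    have "(\<Sum>j<i. c j) \<le> (\<Sum>j<i. 1 - R)" using cb by (intro sum_mono) auto
    then have "(\<Sum>j<i. c j) \<le> (1 - R) * real i" by (simp add: mult.commute)
    then show ?thesis unfolding X_def by (rule mult_right_mono) simp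
  qed
  have X0: "0 \<le> X" unfolding X_def using cb by (intro mult_nonneg_nonneg sum_nonneg) auto
  have W: "W \<le> (1 - R) * (\<Sum>j<i. L * a j)"
  proof -
    have "W \<le> (\<Sum>j<i. (1 - R) * (L * a j))"
      unfolding W_def
    proof (rule sum_mono)
      fix j assume "j \<in> {..<i}"
      then have j: "j < i" by simp
      have "c j * norm (dl j) \<le> c j * (L * a j)" using cb[OF j] dl[OF j] by (simp add: mult_left_mono)
      also have "\<dots> \<le> (1 - R) * (L * a j)"
        using cb[OF j] dl[OF j] by (intro mult_right_mono) (auto intro: order_trans[OF norm_ge_zero])
      finally show "c j * norm (dl j) \<le> (1 - R) * (L * a j)" .
    qed
    then show ?thesis by (simp add: sum_distrib_left)
  qed
  have W0: "0 \<le> W" unfolding W_def using cb by (intro sum_nonneg mult_nonneg_nonneg) auto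
  have La0: "0 \<le> (\<Sum>j<i. L * a j)" using dl by (intro sum_nonneg) (auto intro: order_trans[OF norm_ge_zero])
  have ny: "norm y \<le> R * norm e + ta * (X + Y + W)"
  proof -
    have "norm y \<le> norm ((B * beta ^ i) *\<^sub>R e) + norm (ta *\<^sub>R (\<Sum>j<i. c j *\<^sub>R D j))"
      unfolding y c_def by (rule norm_triangle_ineq4)
    also have "norm ((B * beta ^ i) *\<^sub>R e) = R * norm e" using R unfolding R_def by simp
    also have "norm (ta *\<^sub>R (\<Sum>j<i. c j *\<^sub>R D j)) \<le> ta * (X + Y + W)"
      using ta N by (simp add: mult_left_mono)
    finally show ?thesis by simp
  qed
  have "(norm y)\<^sup>2 \<le> (R * norm e + ta * (X + Y + W))\<^sup>2"
    using ny by (intro power_mono) auto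
  also have "\<dots> \<le> R * (norm e)\<^sup>2 + (ta * (X + Y + W))\<^sup>2 / (1 - R)" by (rule amgm2[OF R])
  also have "(ta * (X + Y + W))\<^sup>2 \<le> ta\<^sup>2 * (3 * (X\<^sup>2 + Y\<^sup>2 + W\<^sup>2))"
    unfolding power_mult_distrib by (intro mult_left_mono three_sq) simp
  also have "R * (norm e)\<^sup>2 \<le> B * (norm e)\<^sup>2"
    unfolding R_def using B beta by (intro mult_right_mono) (auto simp: mult_left_le power_le_one)
  finally have A: "(norm y)\<^sup>2 \<le> B * (norm e)\<^sup>2 + 3 * ta\<^sup>2 * (X\<^sup>2 / (1 - R) + Y\<^sup>2 / (1 - R) + W\<^sup>2 / (1 - R))"
    using R by (simp add: divide_right_mono add_divide_distrib algebra_simps)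
  have X2: "X\<^sup>2 / (1 - R) \<le> (real i)\<^sup>2 * (norm gb)\<^sup>2"
  proof -
    have "X\<^sup>2 \<le> ((1 - R) * real i * norm gb)\<^sup>2" using X X0 by (intro power_mono) auto
    also have "\<dots> = (1 - R) * ((1 - R) * ((real i)\<^sup>2 * (norm gb)\<^sup>2))" by (simp add: power2_eq_square algebra_simps)
    finally have "X\<^sup>2 / (1 - R) \<le> (1 - R) * ((real i)\<^sup>2 * (norm gb)\<^sup>2)" using R by (simp add: pos_divide_le_eq mult_ac)
    also have "\<dots> \<le> (real i)\<^sup>2 * (norm gb)\<^sup>2" using R by (intro mult_left_le_one_le) auto
    finally show ?thesis .
  qed
  have W2: "W\<^sup>2 / (1 - R) \<le> real i * L\<^sup>2 * (\<Sum>j<i. (a j)\<^sup>2)"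
  proof -
    have "W\<^sup>2 \<le> ((1 - R) * (\<Sum>j<i. L * a j))\<^sup>2" using W W0 by (intro power_mono) auto
    also have "\<dots> = (1 - R) * ((1 - R) * (\<Sum>j<i. L * a j)\<^sup>2)" by (simp add: power2_eq_square algebra_simps)
    finally have "W\<^sup>2 / (1 - R) \<le> (1 - R) * (\<Sum>j<i. L * a j)\<^sup>2" using R by (simp add: pos_divide_le_eq mult_ac)
    also have "\<dots> \<le> (\<Sum>j<i. L * a j)\<^sup>2" using R by (intro mult_left_le_one_le) auto
    also have "\<dots> \<le> (\<Sum>j<i. (L * a j)\<^sup>2) * real (card {..<i})" by (rule sum_squared_le_sum_of_squares)
    also have "\<dots> = real i * L\<^sup>2 * (\<Sum>j<i. (a j)\<^sup>2)"
      by (simp add: power_mult_distrib sum_distrib_left mult_ac)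
    finally show ?thesis .
  qed
  have Y2: "Y\<^sup>2 / (1 - R) = (norm (\<Sum>j<i. (1 - B * beta ^ (i - j)) *\<^sub>R xi j))\<^sup>2 / (1 - B * beta ^ i)"
    unfolding Y_def c_def R_def ..
  have "3 * ta\<^sup>2 * (X\<^sup>2 / (1 - R) + Y\<^sup>2 / (1 - R) + W\<^sup>2 / (1 - R))
     \<le> 3 * ta\<^sup>2 * ((real i)\<^sup>2 * (norm gb)\<^sup>2
      + (norm (\<Sum>j<i. (1 - B * beta ^ (i - j)) *\<^sub>R xi j))\<^sup>2 / (1 - B * beta ^ i)
      + real i * L\<^sup>2 * (\<Sum>j<i. (a j)\<^sup>2))"
    unfolding Y2[symmetric] by (intro mult_left_mono add_mono X2 W2 order_refl) simp
  then show ?thesis using A by linarith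
qed




lemma batch_sum:
  fixes F :: "nat \<Rightarrow> 'b::comm_monoid_add"
  shows "(\<Sum>j<i. \<Sum>l = j * b + 1 .. Suc j * b. F l) = (\<Sum>l = 1 .. i * b. F l)"
proof (induction i)
  case (Suc i)
  have "(\<Sum>l = 1 .. Suc i * b. F l) = (\<Sum>l = 1 .. i * b + b. F l)" by (simp add: add.commute)
  also have "\<dots> = (\<Sum>l = 1 .. i * b. F l) + (\<Sum>l = i * b + 1 .. i * b + b. F l)"
    by (rule sum.ub_add_nat) simp
  finally show ?case using Suc by (simp add: add.commute)
qed simp

lemma batch_card: "card {j * b + 1 .. Suc j * b} = b"
  by simp

lemma batch_mem:
  assumes "l \<in> {j * b + 1 .. Suc j * b}" "j < m"
  shows "l \<in> {1 .. m * b}"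
proof -
  have "Suc j * b \<le> m * b" using assms(2) by (intro mult_right_mono) auto
  then show ?thesis using assms(1) by auto
qed

lemma batch_div:
  assumes "l \<in> {j * b + 1 .. Suc j * b}" "0 < b"
  shows "(l - 1) div b = j"
proof -
  have "j * b \<le> l - 1" "l - 1 < Suc j * b" using assms by auto
  then show ?thesis using assms(2)
    by (metis div_nat_eqI mult.commute)
qed

lemma sum_lin_le: "(\<Sum>i<m. real i) \<le> (real m)\<^sup>2 / 2"
proof (induction m)
  case (Suc m)
  then show ?case by (simp add: power2_eq_square field_simps)
qed simp

lemma sum_sq_le: "(\<Sum>i<m. (real i)\<^sup>2) \<le> (real m) ^ 3 / 3"
proof (induction m)
  case (Suc m)
  have "(real m) ^ 3 / 3 + (real m)\<^sup>2 \<le> (real (Suc m)) ^ 3 / 3"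
    by (simp add: power2_eq_square power3_eq_cube field_simps)
  then show ?case using Suc by simp
qed simp





lemma step_bound:
  fixes al beta L :: real and m :: nat
  assumes "0 < al" "al \<le> (1 - beta) / (sqrt 8 * L * real m)" "beta < 1" "0 < L" "0 < m"
  shows "(al / (1 - beta))\<^sup>2 * (real m)\<^sup>2 * L\<^sup>2 \<le> 1 / 8"
proof -
  have pos: "0 < sqrt 8 * L * real m" using assms by simp
  have "al / (1 - beta) \<le> 1 / (sqrt 8 * L * real m)"
    using assms pos by (simp add: field_simps)
  then have "al / (1 - beta) * (L * real m) \<le> 1 / sqrt 8"
    using assms pos by (simp add: field_simps)
  moreover have "0 \<le> al / (1 - beta) * (L * real m)" using assms by simp
  ultimately have "(al / (1 - beta) * (L * real m))\<^sup>2 \<le> (1 / sqrt 8)\<^sup>2"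
    by (intro power_mono) auto
  also have "(1 / sqrt 8)\<^sup>2 = (1 / 8 :: real)" by (simp add: power_divide)
  finally have X: "(al / (1 - beta) * (L * real m))\<^sup>2 \<le> 1 / 8" .
  have "(al / (1 - beta))\<^sup>2 * (real m)\<^sup>2 * L\<^sup>2 = (al / (1 - beta) * (L * real m))\<^sup>2"
    by (simp only: power_mult_distrib mult_ac)
  then show ?thesis using X by simp
qed


lemma lin_aux:
  fixes x y w :: real
  assumes "0 \<le> x" "0 \<le> y" "0 \<le> w"
  shows "8 / 7 * (y + 2 * x) \<le> 5 / 4 * y + 5 / 4 * w + 15 / 4 * x"
  using assms by (simp add: field_simps)

lemma main_a:
  fixes fs :: "nat \<Rightarrow> 'a::euclidean_space \<Rightarrow> real" and g :: "nat \<Rightarrow> 'a \<Rightarrow> 'a"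
    and n b :: nat and L fbar beta lam al :: real and p :: "nat \<Rightarrow> nat" and u0 v0 :: 'a
  assumes n_pos: "0 < n" and b_pos: "0 < b" and b_dvd: "b dvd n"
    and deriv: "\<And>i y. i \<in> {1..n} \<Longrightarrow> (fs i has_derivative (\<lambda>h. g i y \<bullet> h)) (at y)"
    and L_pos: "0 < L"
    and lip: "\<And>i y w. i \<in> {1..n} \<Longrightarrow> norm (g i y - g i w) \<le> L * norm (y - w)"
    and lower: "\<And>i y. i \<in> {1..n} \<Longrightarrow> fbar \<le> fs i y"
    and beta: "0 \<le> beta" "beta < 1" and lam: "0 \<le> lam" "lam \<le> beta / (1 - beta)"
    and al: "0 < al" "al \<le> (1 - beta) / (sqrt 8 * L * real (n div b))"
    and perm: "p permutes {1..n}"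
  shows "(\<Sum>t = 1..n div b. (norm (rrm_yhat g b al beta lam p u0 v0 t - rrm_z beta u0 v0))\<^sup>2)
        \<le> 5 * real (n div b) / 4 *
           (rrm_B beta lam * (norm (rrm_z beta u0 v0 - v0))\<^sup>2
            + (real (n div b))\<^sup>2 * al\<^sup>2 / (1 - beta)\<^sup>2 * (norm ((1 / real n) *\<^sub>R (\<Sum>i = 1..n. g i (rrm_z beta u0 v0))))\<^sup>2
            + 3 * L * (real (n div b))\<^sup>2 * al\<^sup>2 / (1 - beta)\<^sup>2 * ((1 / real n) * (\<Sum>i = 1..n. fs i (rrm_z beta u0 v0)) - fbar))"
proof -
  define m where "m = n div b"
  define z where "z = rrm_z beta u0 v0"
  define B where "B = rrm_B beta lam"
  define ta where "ta = al / (1 - beta)"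
  define U where "U i = fst (rrm_inner g b al beta lam p u0 v0 i)" for i
  define V where "V i = snd (rrm_inner g b al beta lam p u0 v0 i)" for i
  define Yh where "Yh i = V i + lam *\<^sub>R (V i - U i)" for i
  define D where "D i = (1 / real b) *\<^sub>R (\<Sum>l = i * b + 1 .. Suc i * b. g (p l) (Yh i))" for i
  define a where "a i = norm (Yh i - z)" for i
  define Dlt where "Dlt = (1 / real n) * (\<Sum>i = 1..n. fs i z) - fbar"
  define gb where "gb = (1 / real n) *\<^sub>R (\<Sum>i = 1..n. g i z)"
  define W where "W = (norm (v0 - z))\<^sup>2"
  define N where "N j = (1 / real b) * (\<Sum>l = j * b + 1 .. Suc j * b. norm (g (p l) z))" for j
  define S where "S = (\<Sum>i<m. (a i)\<^sup>2)"
  have nmb: "n = m * b" using b_dvd unfolding m_def by simp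
  have m_pos: "0 < m" using nmb n_pos by (cases m) auto
  have US: "U (Suc i) = V i" for i unfolding U_def V_def by (simp only: rrm_inner.simps Let_def fst_conv snd_conv)
  have VS: "V (Suc i) = V i - al *\<^sub>R D i + beta *\<^sub>R (V i - U i)" for i
    unfolding U_def V_def D_def Yh_def by (simp only: rrm_inner.simps Let_def fst_conv snd_conv)
  have U0: "U 0 = u0" "V 0 = v0" by (simp_all add: U_def V_def)
  have key: "Yh i - z = (B * beta ^ i) *\<^sub>R (v0 - z) - ta *\<^sub>R (\<Sum>j<i. (1 - B * beta ^ (i - j)) *\<^sub>R D j)" for i
    using key_abs[of U V al D beta lam i, OF US VS beta lam] unfolding Yh_def z_def B_def ta_def U0 .
  have Bb: "0 \<le> B" "B \<le> 1" using B_bounds[OF beta lam] unfolding B_def by auto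
  have ta0: "0 \<le> ta" unfolding ta_def using al beta by simp
  have pa: "(a i)\<^sup>2 \<le> B * W + ta\<^sup>2 * real i * (\<Sum>j<i. (norm (D j))\<^sup>2)" for i
    unfolding a_def W_def by (rule per_i_a[OF key Bb]) (use beta ta0 in auto)
  have pin: "p l \<in> {1..n}" if "l \<in> {j * b + 1 .. Suc j * b}" "j < m" for l j
    using batch_mem[OF that] nmb permutes_in_image[OF perm] by (simp add: mult.commute)
  have a0: "0 \<le> a j" for j unfolding a_def by simp
  have Dn: "norm (D j) \<le> N j + L * a j" if j: "j < m" for j
  proof -
    have "norm (D j) = (1 / real b) * norm (\<Sum>l = j * b + 1 .. Suc j * b. g (p l) (Yh j))"
      unfolding D_def by simp
    also have "\<dots> \<le> (1 / real b) * (\<Sum>l = j * b + 1 .. Suc j * b. norm (g (p l) z) + L * a j)"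
    proof (rule mult_left_mono)
      have "norm (\<Sum>l = j * b + 1 .. Suc j * b. g (p l) (Yh j)) \<le> (\<Sum>l = j * b + 1 .. Suc j * b. norm (g (p l) (Yh j)))"
        by (rule norm_sum)
      also have "\<dots> \<le> (\<Sum>l = j * b + 1 .. Suc j * b. norm (g (p l) z) + L * a j)"
      proof (rule sum_mono)
        fix l assume l: "l \<in> {j * b + 1 .. Suc j * b}"
        have "norm (g (p l) (Yh j)) \<le> norm (g (p l) z) + norm (g (p l) (Yh j) - g (p l) z)"
          by (rule norm_triangle_sub)
        also have "norm (g (p l) (Yh j) - g (p l) z) \<le> L * a j"
          unfolding a_def by (rule lip[OF pin[OF l j]])
        finally show "norm (g (p l) (Yh j)) \<le> norm (g (p l) z) + L * a j" by simp
      qed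
      finally show "norm (\<Sum>l = j * b + 1 .. Suc j * b. g (p l) (Yh j)) \<le> (\<Sum>l = j * b + 1 .. Suc j * b. norm (g (p l) z) + L * a j)" .
    qed simp
    also have "\<dots> = N j + L * a j"
      unfolding N_def sum.distrib using b_pos by (simp add: field_simps)
    finally show ?thesis .
  qed
  have N0: "0 \<le> N j" for j unfolding N_def by (simp add: sum_nonneg)
  have D2: "(norm (D j))\<^sup>2 \<le> 2 * (N j)\<^sup>2 + 2 * L\<^sup>2 * (a j)\<^sup>2" if "j < m" for j
  proof -
    have "(norm (D j))\<^sup>2 \<le> (N j + L * a j)\<^sup>2" using Dn[OF that] by (intro power_mono) auto
    also have "\<dots> \<le> 2 * (N j)\<^sup>2 + 2 * L\<^sup>2 * (a j)\<^sup>2"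
    proof -
      have "0 \<le> (N j - L * a j)\<^sup>2" by simp
      then show ?thesis by (simp add: power2_eq_square algebra_simps)
    qed
    finally show ?thesis .
  qed
  have N2: "(N j)\<^sup>2 \<le> (1 / real b) * (\<Sum>l = j * b + 1 .. Suc j * b. (norm (g (p l) z))\<^sup>2)" for j
  proof -
    have "(\<Sum>l = j * b + 1 .. Suc j * b. norm (g (p l) z))\<^sup>2 \<le> (\<Sum>l = j * b + 1 .. Suc j * b. (norm (g (p l) z))\<^sup>2) * real b"
      using sum_squared_le_sum_of_squares[of "\<lambda>l. norm (g (p l) z)" "{j * b + 1 .. Suc j * b}"] by simp
    then show ?thesis unfolding N_def using b_pos
      by (simp add: power_mult_distrib power2_eq_square field_simps)
  qed
  have gz: "(norm (g i z))\<^sup>2 \<le> 2 * L * (fs i z - fbar)" if "i \<in> {1..n}" for i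
    by (rule grad_bound[OF deriv[OF that] lip[OF that] lower[OF that] L_pos])
  have Dlt0: "0 \<le> Dlt"
  proof -
    have "real n * fbar \<le> (\<Sum>i = 1..n. fs i z)"
      using sum_mono[of "{1..n}" "\<lambda>i. fbar" "\<lambda>i. fs i z"] lower by simp
    then show ?thesis unfolding Dlt_def using n_pos by (simp add: field_simps)
  qed
  have gsum: "(\<Sum>j<m. (N j)\<^sup>2) \<le> 2 * L * real m * Dlt"
  proof -
    have "(\<Sum>j<m. (N j)\<^sup>2) \<le> (\<Sum>j<m. (1 / real b) * (\<Sum>l = j * b + 1 .. Suc j * b. (norm (g (p l) z))\<^sup>2))"
      by (intro sum_mono N2)
    also have "\<dots> = (1 / real b) * (\<Sum>j<m. \<Sum>l = j * b + 1 .. Suc j * b. (norm (g (p l) z))\<^sup>2)"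
      by (simp only: sum_distrib_left)
    also have "\<dots> = (1 / real b) * (\<Sum>l = 1 .. m * b. (norm (g (p l) z))\<^sup>2)"
      by (simp only: batch_sum)
    also have "(\<Sum>l = 1 .. m * b. (norm (g (p l) z))\<^sup>2) = (\<Sum>i = 1 .. n. (norm (g i z))\<^sup>2)"
      unfolding nmb[symmetric] by (rule perm_reindex[OF perm])
    also have "\<dots> \<le> (\<Sum>i = 1 .. n. 2 * L * (fs i z - fbar))" by (intro sum_mono gz)
    also have "\<dots> = 2 * L * (real n * Dlt)"
      unfolding Dlt_def using n_pos by (simp add: sum_distrib_left[symmetric] sum_subtractf field_simps)
    finally show ?thesis using nmb b_pos by (simp add: field_simps)
  qed
  have K: "ta\<^sup>2 * (real m)\<^sup>2 * L\<^sup>2 \<le> 1 / 8"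
    unfolding ta_def m_def by (rule step_bound[OF al beta(2) L_pos]) (use m_pos m_def in simp)
  have SS: "S \<le> real m * (B * W) + ta\<^sup>2 * ((real m)\<^sup>2 / 2) * (\<Sum>j<m. (norm (D j))\<^sup>2)"
  proof -
    have "S \<le> (\<Sum>i<m. B * W + ta\<^sup>2 * real i * (\<Sum>j<m. (norm (D j))\<^sup>2))"
      unfolding S_def
    proof (rule sum_mono)
      fix i assume "i \<in> {..<m}"
      have "(\<Sum>j<i. (norm (D j))\<^sup>2) \<le> (\<Sum>j<m. (norm (D j))\<^sup>2)"
        using \<open>i \<in> {..<m}\<close> by (intro sum_mono2) auto
      then have "ta\<^sup>2 * real i * (\<Sum>j<i. (norm (D j))\<^sup>2) \<le> ta\<^sup>2 * real i * (\<Sum>j<m. (norm (D j))\<^sup>2)"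
        by (intro mult_left_mono) auto
      then show "(a i)\<^sup>2 \<le> B * W + ta\<^sup>2 * real i * (\<Sum>j<m. (norm (D j))\<^sup>2)" using pa[of i] by linarith
    qed
    also have "\<dots> = real m * (B * W) + ta\<^sup>2 * (\<Sum>i<m. real i) * (\<Sum>j<m. (norm (D j))\<^sup>2)"
      by (simp add: sum.distrib sum_distrib_left sum_distrib_right mult_ac)
    also have "\<dots> \<le> real m * (B * W) + ta\<^sup>2 * ((real m)\<^sup>2 / 2) * (\<Sum>j<m. (norm (D j))\<^sup>2)"
      by (intro add_left_mono mult_right_mono mult_left_mono sum_lin_le) (auto intro: sum_nonneg)
    finally show ?thesis .
  qed
  have DS: "(\<Sum>j<m. (norm (D j))\<^sup>2) \<le> 2 * (2 * L * real m * Dlt) + 2 * L\<^sup>2 * S"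
  proof -
    have "(\<Sum>j<m. (norm (D j))\<^sup>2) \<le> (\<Sum>j<m. 2 * (N j)\<^sup>2 + 2 * L\<^sup>2 * (a j)\<^sup>2)"
      by (intro sum_mono D2) auto
    also have "\<dots> = 2 * (\<Sum>j<m. (N j)\<^sup>2) + 2 * L\<^sup>2 * S"
      unfolding S_def by (simp add: sum.distrib sum_distrib_left)
    finally show ?thesis using gsum by linarith
  qed
  have S0: "0 \<le> S" unfolding S_def by (simp add: sum_nonneg)
  have BW0: "0 \<le> B * W" unfolding W_def using Bb by simp
  define Q where "Q = real m * (B * W) + 2 * ta\<^sup>2 * L * (real m) ^ 3 * Dlt"
  have "ta\<^sup>2 * ((real m)\<^sup>2 / 2) * (\<Sum>j<m. (norm (D j))\<^sup>2) \<le> ta\<^sup>2 * ((real m)\<^sup>2 / 2) * (2 * (2 * L * real m * Dlt) + 2 * L\<^sup>2 * S)"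
    by (rule mult_left_mono[OF DS]) simp
  then have "S \<le> real m * (B * W) + ta\<^sup>2 * ((real m)\<^sup>2 / 2) * (2 * (2 * L * real m * Dlt) + 2 * L\<^sup>2 * S)"
    using SS by linarith
  also have "\<dots> = Q + (ta\<^sup>2 * (real m)\<^sup>2 * L\<^sup>2) * S"
    unfolding Q_def by (simp add: power2_eq_square power3_eq_cube algebra_simps)
  finally have "S \<le> Q + (ta\<^sup>2 * (real m)\<^sup>2 * L\<^sup>2) * S" .
  moreover have "(ta\<^sup>2 * (real m)\<^sup>2 * L\<^sup>2) * S \<le> 1 / 8 * S" by (rule mult_right_mono[OF K S0])
  ultimately have SQ: "S \<le> 8 / 7 * Q" by linarith
  have gb0: "0 \<le> (real m)\<^sup>2 * ta\<^sup>2 * (norm gb)\<^sup>2" by simp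
  have fin: "8 / 7 * Q \<le> 5 * real m / 4 * (B * W + (real m)\<^sup>2 * ta\<^sup>2 * (norm gb)\<^sup>2 + 3 * L * (real m)\<^sup>2 * ta\<^sup>2 * Dlt)"
  proof -
    have e: "5 * real m / 4 * (B * W + (real m)\<^sup>2 * ta\<^sup>2 * (norm gb)\<^sup>2 + 3 * L * (real m)\<^sup>2 * ta\<^sup>2 * Dlt)
      = 5 / 4 * (real m * (B * W)) + 5 / 4 * (real m * ((real m)\<^sup>2 * ta\<^sup>2 * (norm gb)\<^sup>2)) + 15 / 4 * (ta\<^sup>2 * L * (real m) ^ 3 * Dlt)"
      by (simp add: algebra_simps power2_eq_square power3_eq_cube)
    have C: "0 \<le> ta\<^sup>2 * L * (real m) ^ 3 * Dlt" using Dlt0 L_pos by simp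
    have T1: "0 \<le> real m * (B * W)" using BW0 by simp
    have T3: "0 \<le> real m * ((real m)\<^sup>2 * ta\<^sup>2 * (norm gb)\<^sup>2)" by simp
    have e2: "2 * ta\<^sup>2 * L * (real m) ^ 3 * Dlt = 2 * (ta\<^sup>2 * L * (real m) ^ 3 * Dlt)" by simp
    show ?thesis unfolding e Q_def e2 by (rule lin_aux[OF C T1 T3])
  qed
  have lhs: "(\<Sum>t = 1..n div b. (norm (rrm_yhat g b al beta lam p u0 v0 t - rrm_z beta u0 v0))\<^sup>2) = S"
    unfolding S_def m_def[symmetric]
    by (simp add: sum.atLeast1_atMost_eq rrm_yhat_def Let_def a_def Yh_def U_def V_def z_def)
  have ta2: "ta\<^sup>2 = al\<^sup>2 / (1 - beta)\<^sup>2" unfolding ta_def by (simp add: power_divide)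
  have R: "5 * real m / 4 * (B * W + (real m)\<^sup>2 * ta\<^sup>2 * (norm gb)\<^sup>2 + 3 * L * (real m)\<^sup>2 * ta\<^sup>2 * Dlt)
     = 5 * real (n div b) / 4 *
           (rrm_B beta lam * (norm (rrm_z beta u0 v0 - v0))\<^sup>2
            + (real (n div b))\<^sup>2 * al\<^sup>2 / (1 - beta)\<^sup>2 * (norm ((1 / real n) *\<^sub>R (\<Sum>i = 1..n. g i (rrm_z beta u0 v0))))\<^sup>2
            + 3 * L * (real (n div b))\<^sup>2 * al\<^sup>2 / (1 - beta)\<^sup>2 * ((1 / real n) * (\<Sum>i = 1..n. fs i (rrm_z beta u0 v0)) - fbar))"
    unfolding m_def B_def W_def gb_def Dlt_def z_def ta2 by (simp add: norm_minus_commute)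
  show ?thesis
    using SQ fin unfolding lhs R[symmetric] by linarith
qed




lemma xi_conv:
  fixes h :: "nat \<Rightarrow> 'a::real_vector" and c :: "nat \<Rightarrow> real"
  assumes b: "0 < b"
  shows "(\<Sum>j<i. c j *\<^sub>R ((1 / real b) *\<^sub>R (\<Sum>l = j * b + 1 .. Suc j * b. h l)))
       = (\<Sum>l = 1 .. i * b. (c ((l - 1) div b) / real b) *\<^sub>R h l)"
proof -
  have "(\<Sum>j<i. c j *\<^sub>R ((1 / real b) *\<^sub>R (\<Sum>l = j * b + 1 .. Suc j * b. h l)))
      = (\<Sum>j<i. \<Sum>l = j * b + 1 .. Suc j * b. (c ((l - 1) div b) / real b) *\<^sub>R h l)"
  proof (rule sum.cong[OF refl])
    fix j assume "j \<in> {..<i}"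
    have "c j *\<^sub>R ((1 / real b) *\<^sub>R (\<Sum>l = j * b + 1 .. Suc j * b. h l)) = (\<Sum>l = j * b + 1 .. Suc j * b. (c j / real b) *\<^sub>R h l)"
      by (simp add: scaleR_sum_right)
    also have "\<dots> = (\<Sum>l = j * b + 1 .. Suc j * b. (c ((l - 1) div b) / real b) *\<^sub>R h l)"
    proof (rule sum.cong[OF refl])
      fix l assume l: "l \<in> {j * b + 1 .. Suc j * b}"
      have "(l - 1) div b = j" by (rule batch_div[OF l b])
      then show "(c j / real b) *\<^sub>R h l = (c ((l - 1) div b) / real b) *\<^sub>R h l" by simp
    qed
    finally show "c j *\<^sub>R ((1 / real b) *\<^sub>R (\<Sum>l = j * b + 1 .. Suc j * b. h l)) = (\<Sum>l = j * b + 1 .. Suc j * b. (c ((l - 1) div b) / real b) *\<^sub>R h l)" .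
  qed
  also have "\<dots> = (\<Sum>l = 1 .. i * b. (c ((l - 1) div b) / real b) *\<^sub>R h l)" by (rule batch_sum)
  finally show ?thesis .
qed

lemma lin_aux2:
  fixes S Q k :: real
  assumes "S \<le> Q + k * S"
  shows "(1 - k) * S \<le> Q"
  using assms by (simp add: algebra_simps)

lemma point_b:
  fixes fs :: "nat \<Rightarrow> 'a::euclidean_space \<Rightarrow> real" and g :: "nat \<Rightarrow> 'a \<Rightarrow> 'a"
    and n b :: nat and L fbar beta lam al :: real and p :: "nat \<Rightarrow> nat" and u0 v0 :: 'a
  assumes n_pos: "0 < n" and b_pos: "0 < b" and b_dvd: "b dvd n"
    and L_pos: "0 < L"
    and lip: "\<And>i y w. i \<in> {1..n} \<Longrightarrow> norm (g i y - g i w) \<le> L * norm (y - w)"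
    and beta: "0 \<le> beta" "beta < 1" and lam: "0 \<le> lam" "lam \<le> beta / (1 - beta)"
    and al: "0 < al"
    and perm: "p permutes {1..n}"
  defines "z \<equiv> rrm_z beta u0 v0" and "gb \<equiv> (1 / real n) *\<^sub>R (\<Sum>i = 1..n. g i (rrm_z beta u0 v0))"
    and "B \<equiv> rrm_B beta lam" and "ta \<equiv> al / (1 - beta)" and "m \<equiv> n div b"
  shows "(1 - 3 / 2 * (ta\<^sup>2 * (real m)\<^sup>2 * L\<^sup>2)) * (\<Sum>t = 1..m. (norm (rrm_yhat g b al beta lam p u0 v0 t - z))\<^sup>2)
     \<le> real m * (B * (norm (z - v0))\<^sup>2) + ta\<^sup>2 * (real m) ^ 3 * (norm gb)\<^sup>2
       + 3 * ta\<^sup>2 * (\<Sum>i<m. (norm (\<Sum>l = 1 .. i * b. ((1 - B * beta ^ (i - (l - 1) div b)) / real b) *\<^sub>R (g (p l) z - gb)))\<^sup>2 / (1 - B * beta ^ i))"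
proof -
  define U where "U i = fst (rrm_inner g b al beta lam p u0 v0 i)" for i
  define V where "V i = snd (rrm_inner g b al beta lam p u0 v0 i)" for i
  define Yh where "Yh i = V i + lam *\<^sub>R (V i - U i)" for i
  define D where "D i = (1 / real b) *\<^sub>R (\<Sum>l = i * b + 1 .. Suc i * b. g (p l) (Yh i))" for i
  define G where "G i = (1 / real b) *\<^sub>R (\<Sum>l = i * b + 1 .. Suc i * b. g (p l) z)" for i
  define xi where "xi i = G i - gb" for i
  define dl where "dl i = D i - G i" for i
  define a where "a i = norm (Yh i - z)" for i
  define W where "W = (norm (v0 - z))\<^sup>2"
  define S where "S = (\<Sum>i<m. (a i)\<^sup>2)"
  define Xi where "Xi i = (norm (\<Sum>j<i. (1 - B * beta ^ (i - j)) *\<^sub>R xi j))\<^sup>2 / (1 - B * beta ^ i)" for i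
  have nmb: "n = m * b" using b_dvd unfolding m_def by simp
  have m_pos: "0 < m" using nmb n_pos by (cases m) auto
  have US: "U (Suc i) = V i" for i unfolding U_def V_def by (simp only: rrm_inner.simps Let_def fst_conv snd_conv)
  have VS: "V (Suc i) = V i - al *\<^sub>R D i + beta *\<^sub>R (V i - U i)" for i
    unfolding U_def V_def D_def Yh_def by (simp only: rrm_inner.simps Let_def fst_conv snd_conv)
  have U0: "U 0 = u0" "V 0 = v0" by (simp_all add: U_def V_def)
  have key: "Yh i - z = (B * beta ^ i) *\<^sub>R (v0 - z) - ta *\<^sub>R (\<Sum>j<i. (1 - B * beta ^ (i - j)) *\<^sub>R D j)" for i
    using key_abs[of U V al D beta lam i, OF US VS beta lam] unfolding Yh_def z_def B_def ta_def U0 .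
  have Bb: "0 \<le> B" "B \<le> 1" using B_bounds[OF beta lam] unfolding B_def by auto
  have ta0: "0 \<le> ta" unfolding ta_def using al beta by simp
  have pin: "p l \<in> {1..n}" if "l \<in> {j * b + 1 .. Suc j * b}" "j < m" for l j
    using batch_mem[OF that] nmb permutes_in_image[OF perm] by (simp add: mult.commute)
  have Dd: "D j = gb + xi j + dl j" for j unfolding xi_def dl_def by simp
  have dln: "norm (dl j) \<le> L * a j" if j: "j < m" for j
  proof -
    have "dl j = (1 / real b) *\<^sub>R (\<Sum>l = j * b + 1 .. Suc j * b. g (p l) (Yh j) - g (p l) z)"
      unfolding dl_def D_def G_def by (simp add: sum_subtractf scaleR_diff_right)
    then have "norm (dl j) = (1 / real b) * norm (\<Sum>l = j * b + 1 .. Suc j * b. g (p l) (Yh j) - g (p l) z)"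
      by simp
    also have "\<dots> \<le> (1 / real b) * (\<Sum>l = j * b + 1 .. Suc j * b. L * a j)"
    proof (rule mult_left_mono)
      show "norm (\<Sum>l = j * b + 1 .. Suc j * b. g (p l) (Yh j) - g (p l) z) \<le> (\<Sum>l = j * b + 1 .. Suc j * b. L * a j)"
        by (rule order_trans[OF norm_sum sum_mono]) (unfold a_def, rule lip[OF pin[OF _ j]], assumption)
    qed simp
    also have "\<dots> = L * a j" using b_pos by simp
    finally show ?thesis .
  qed
  have pb: "(a i)\<^sup>2 \<le> B * W + 3 * ta\<^sup>2 * ((real i)\<^sup>2 * (norm gb)\<^sup>2 + Xi i + real i * L\<^sup>2 * (\<Sum>j<i. (a j)\<^sup>2))" if i: "i < m" for i
    unfolding a_def W_def Xi_def
    by (rule per_i_b[OF key Dd, of i L "\<lambda>j. norm (Yh j - z)", OF _ Bb beta ta0])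
       (use dln i in \<open>auto simp: a_def\<close>)
  have S0: "0 \<le> S" unfolding S_def by (simp add: sum_nonneg)
  have inner: "(\<Sum>i<m. real i * L\<^sup>2 * (\<Sum>j<i. (a j)\<^sup>2)) \<le> (real m)\<^sup>2 / 2 * L\<^sup>2 * S"
  proof -
    have "(\<Sum>i<m. real i * L\<^sup>2 * (\<Sum>j<i. (a j)\<^sup>2)) \<le> (\<Sum>i<m. real i * L\<^sup>2 * S)"
    proof (rule sum_mono)
      fix i assume "i \<in> {..<m}"
      have "(\<Sum>j<i. (a j)\<^sup>2) \<le> S" unfolding S_def using \<open>i \<in> {..<m}\<close> by (intro sum_mono2) auto
      then show "real i * L\<^sup>2 * (\<Sum>j<i. (a j)\<^sup>2) \<le> real i * L\<^sup>2 * S" by (intro mult_left_mono) auto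
    qed
    also have "\<dots> = (\<Sum>i<m. real i) * (L\<^sup>2 * S)" by (simp only: sum_distrib_right mult.assoc)
    also have "\<dots> \<le> (real m)\<^sup>2 / 2 * (L\<^sup>2 * S)" by (rule mult_right_mono[OF sum_lin_le]) (use S0 in simp)
    finally show ?thesis by (simp add: mult_ac)
  qed
  have sq: "(\<Sum>i<m. (real i)\<^sup>2 * (norm gb)\<^sup>2) \<le> (real m) ^ 3 / 3 * (norm gb)\<^sup>2"
    unfolding sum_distrib_right[symmetric] by (rule mult_right_mono[OF sum_sq_le]) simp
  define A where "A i = (real i)\<^sup>2 * (norm gb)\<^sup>2" for i
  define Cc where "Cc i = real i * L\<^sup>2 * (\<Sum>j<i. (a j)\<^sup>2)" for i
  have "S \<le> (\<Sum>i<m. B * W + 3 * ta\<^sup>2 * (A i + Xi i + Cc i))"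
    unfolding S_def A_def Cc_def by (rule sum_mono) (use pb in auto)
  also have "\<dots> = real m * (B * W) + 3 * ta\<^sup>2 * ((\<Sum>i<m. A i) + (\<Sum>i<m. Xi i) + (\<Sum>i<m. Cc i))"
    by (simp add: sum.distrib sum_distrib_left[symmetric])
  also have "\<dots> \<le> real m * (B * W) + 3 * ta\<^sup>2 * ((real m) ^ 3 / 3 * (norm gb)\<^sup>2 + (\<Sum>i<m. Xi i) + (real m)\<^sup>2 / 2 * L\<^sup>2 * S)"
    unfolding A_def Cc_def by (intro add_left_mono mult_left_mono add_mono sq inner order_refl) simp
  also have "\<dots> = (real m * (B * W) + ta\<^sup>2 * (real m) ^ 3 * (norm gb)\<^sup>2 + 3 * ta\<^sup>2 * (\<Sum>i<m. Xi i))
      + 3 / 2 * (ta\<^sup>2 * (real m)\<^sup>2 * L\<^sup>2) * S"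
    by (simp add: algebra_simps)
  finally have "(1 - 3 / 2 * (ta\<^sup>2 * (real m)\<^sup>2 * L\<^sup>2)) * S \<le> real m * (B * W) + ta\<^sup>2 * (real m) ^ 3 * (norm gb)\<^sup>2 + 3 * ta\<^sup>2 * (\<Sum>i<m. Xi i)"
    by (rule lin_aux2)
  moreover have lhs: "(\<Sum>t = 1..m. (norm (rrm_yhat g b al beta lam p u0 v0 t - z))\<^sup>2) = S"
    unfolding S_def
    by (simp add: sum.atLeast1_atMost_eq rrm_yhat_def Let_def a_def Yh_def U_def V_def)
  moreover have "Xi i = (norm (\<Sum>l = 1 .. i * b. ((1 - B * beta ^ (i - (l - 1) div b)) / real b) *\<^sub>R (g (p l) z - gb)))\<^sup>2 / (1 - B * beta ^ i)" for i
  proof -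
    have "xi j = (1 / real b) *\<^sub>R (\<Sum>l = j * b + 1 .. Suc j * b. g (p l) z - gb)" for j
      unfolding xi_def G_def using b_pos by (simp add: sum_subtractf scaleR_diff_right sum_constant_scaleR)
    then have "(\<Sum>j<i. (1 - B * beta ^ (i - j)) *\<^sub>R xi j) = (\<Sum>l = 1 .. i * b. ((1 - B * beta ^ (i - (l - 1) div b)) / real b) *\<^sub>R (g (p l) z - gb))"
      using xi_conv[OF b_pos, where c="\<lambda>j. 1 - B * beta ^ (i - j)" and i=i and h="\<lambda>l. g (p l) z - gb"] by simp
    then show ?thesis unfolding Xi_def by simp
  qed
  ultimately show ?thesis unfolding W_def by (simp add: norm_minus_commute)
qed


lemma var_le:
  fixes g :: "nat \<Rightarrow> 'a::real_inner"
  assumes "finite K" "card K > 0"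
  defines "gb \<equiv> (1 / real (card K)) *\<^sub>R (\<Sum>k\<in>K. g k)"
  shows "(\<Sum>k\<in>K. (norm (g k - gb))\<^sup>2) \<le> (\<Sum>k\<in>K. (norm (g k))\<^sup>2)"
proof -
  have sg: "(\<Sum>k\<in>K. g k) = real (card K) *\<^sub>R gb" unfolding gb_def using assms by simp
  have "(\<Sum>k\<in>K. (norm (g k - gb))\<^sup>2) = (\<Sum>k\<in>K. (norm (g k))\<^sup>2 - 2 * (g k \<bullet> gb) + (norm gb)\<^sup>2)"
    by (rule sum.cong[OF refl]) (simp add: power2_norm_eq_inner inner_diff_left inner_diff_right inner_commute)
  also have "\<dots> = (\<Sum>k\<in>K. (norm (g k))\<^sup>2) - 2 * ((\<Sum>k\<in>K. g k) \<bullet> gb) + real (card K) * (norm gb)\<^sup>2"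
    by (simp add: sum.distrib sum_subtractf sum_distrib_left inner_sum_left)
  also have "\<dots> = (\<Sum>k\<in>K. (norm (g k))\<^sup>2) - real (card K) * (norm gb)\<^sup>2"
    unfolding sg by (simp add: power2_norm_eq_inner)
  finally show ?thesis by simp
qed

lemma lin_aux3:
  fixes x y w k E cP :: real
  assumes "0 \<le> x" "0 \<le> y" "0 \<le> w" "k \<le> 3 / 16" "0 < cP"
    and "(1 - k) * E \<le> cP * (y + w + 3 * x)"
  shows "E / cP \<le> 5 / 4 * y + 5 / 4 * w + 15 / 4 * x"
proof -
  have k: "0 < 1 - k" using assms by simp
  have "E \<le> cP * (y + w + 3 * x) / (1 - k)" using assms(6) k by (simp add: field_simps)
  also have "\<dots> \<le> cP * (y + w + 3 * x) * (16 / 13)"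
  proof -
    have "1 / (1 - k) \<le> 16 / 13" using assms(4) k by (simp add: field_simps)
    moreover have "0 \<le> cP * (y + w + 3 * x)" using assms by simp
    ultimately show ?thesis by (metis mult_left_mono times_divide_eq_right mult_1_right)
  qed
  finally have "E / cP \<le> (y + w + 3 * x) * (16 / 13)" using assms(5) by (simp add: field_simps)
  also have "\<dots> \<le> 5 / 4 * y + 5 / 4 * w + 15 / 4 * x" using assms(1-3) by (simp add: field_simps)
  finally show ?thesis .
qed

lemma main_b:
  fixes fs :: "nat \<Rightarrow> 'a::euclidean_space \<Rightarrow> real" and g :: "nat \<Rightarrow> 'a \<Rightarrow> 'a"
    and n b :: nat and L fbar beta lam al :: real and u0 v0 :: 'a
  assumes n_pos: "0 < n" and b_pos: "0 < b" and b_dvd: "b dvd n"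
    and deriv: "\<And>i y. i \<in> {1..n} \<Longrightarrow> (fs i has_derivative (\<lambda>h. g i y \<bullet> h)) (at y)"
    and L_pos: "0 < L"
    and lip: "\<And>i y w. i \<in> {1..n} \<Longrightarrow> norm (g i y - g i w) \<le> L * norm (y - w)"
    and lower: "\<And>i y. i \<in> {1..n} \<Longrightarrow> fbar \<le> fs i y"
    and beta: "0 \<le> beta" "beta < 1" and lam: "0 \<le> lam" "lam \<le> beta / (1 - beta)"
    and al: "0 < al" "al \<le> (1 - beta) / (sqrt 8 * L * real (n div b))"
  shows "(\<Sum>t = 1..n div b. measure_pmf.expectation (pmf_of_set {p. p permutes {1..n}})
            (\<lambda>p. (norm (rrm_yhat g b al beta lam p u0 v0 t - rrm_z beta u0 v0))\<^sup>2))
        \<le> 5 * real (n div b) / 4 *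
           (rrm_B beta lam * (norm (rrm_z beta u0 v0 - v0))\<^sup>2
            + (real (n div b))\<^sup>2 * al\<^sup>2 / (1 - beta)\<^sup>2 * (norm ((1 / real n) *\<^sub>R (\<Sum>i = 1..n. g i (rrm_z beta u0 v0))))\<^sup>2
            + 3 * L * real (n div b) * al\<^sup>2 / (real b * (1 - beta)\<^sup>2) * ((1 / real n) * (\<Sum>i = 1..n. fs i (rrm_z beta u0 v0)) - fbar))"
proof -
  define m where "m = n div b"
  define z where "z = rrm_z beta u0 v0"
  define B where "B = rrm_B beta lam"
  define ta where "ta = al / (1 - beta)"
  define gb where "gb = (1 / real n) *\<^sub>R (\<Sum>i = 1..n. g i z)"
  define Dlt where "Dlt = (1 / real n) * (\<Sum>i = 1..n. fs i z) - fbar"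
  define P where "P = {p. p permutes {1..n}}"
  define cP where "cP = real (card P)"
  define F where "F t p = (norm (rrm_yhat g b al beta lam p u0 v0 t - z))\<^sup>2" for t p
  define X where "X p = (\<Sum>t = 1..m. F t p)" for p
  define h where "h k = g k z - gb" for k
  define w where "w i l = (1 - B * beta ^ (i - (l - 1) div b)) / real b" for i l
  define Xi where "Xi i p = (norm (\<Sum>l = 1 .. i * b. w i l *\<^sub>R h (p l)))\<^sup>2 / (1 - B * beta ^ i)" for i p
  define kap where "kap = 3 / 2 * (ta\<^sup>2 * (real m)\<^sup>2 * L\<^sup>2)"
  define sig where "sig = (1 / real n) * (\<Sum>k = 1..n. (norm (h k))\<^sup>2)"
  have nmb: "n = m * b" using b_dvd unfolding m_def by simp
  have m_pos: "0 < m" using nmb n_pos by (cases m) auto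
  have finP: "finite P" unfolding P_def by (simp add: finite_permutations)
  have cardP: "card P = fact n" unfolding P_def by (rule card_permutations) simp_all
  have cP0: "0 < cP" unfolding cP_def cardP by simp
  have PneP: "P \<noteq> {}" using finP cP0 cP_def by auto
  have Bb: "0 \<le> B" "B \<le> 1" using B_bounds[OF beta lam] unfolding B_def by auto
  have K: "ta\<^sup>2 * (real m)\<^sup>2 * L\<^sup>2 \<le> 1 / 8"
    unfolding ta_def m_def by (rule step_bound[OF al beta(2) L_pos]) (use m_pos m_def in simp)
  have kap: "kap \<le> 3 / 16" unfolding kap_def using mult_left_mono[OF K, of "3 / 2"] by simp
  have pt: "(1 - kap) * X p \<le> real m * (B * (norm (z - v0))\<^sup>2) + ta\<^sup>2 * (real m) ^ 3 * (norm gb)\<^sup>2 + 3 * ta\<^sup>2 * (\<Sum>i<m. Xi i p)"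
    if "p \<in> P" for p
    using point_b[OF n_pos b_pos b_dvd L_pos lip beta lam al(1), where p=p and ?u0.0=u0 and ?v0.0=v0] that
    unfolding kap_def X_def F_def Xi_def w_def h_def z_def gb_def B_def ta_def m_def P_def
    by simp
  have h0: "(\<Sum>k = 1..n. h k) = 0"
    unfolding h_def gb_def using n_pos by (simp add: sum_subtractf sum_constant_scaleR)
  have sig_le: "sig \<le> 2 * L * Dlt"
  proof -
    have "(\<Sum>k = 1..n. (norm (h k))\<^sup>2) \<le> (\<Sum>k = 1..n. (norm (g k z))\<^sup>2)"
      unfolding h_def gb_def using var_le[of "{1..n}" "\<lambda>k. g k z"] n_pos by simp
    also have "\<dots> \<le> (\<Sum>k = 1..n. 2 * L * (fs k z - fbar))"
      by (intro sum_mono grad_bound[OF deriv lip lower L_pos]) auto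
    also have "\<dots> = real n * (2 * L * Dlt)"
      unfolding Dlt_def using n_pos by (simp add: sum_distrib_left[symmetric] sum_subtractf field_simps)
    finally show ?thesis unfolding sig_def using n_pos by (simp add: field_simps)
  qed
  have Xi_sum: "(\<Sum>p\<in>P. Xi i p) \<le> cP * (real i / real b) * sig" if i: "i < m" for i
  proof (cases "i = 0")
    case True
    then show ?thesis unfolding Xi_def by simp
  next
    case False
    define R where "R = B * beta ^ i"
    have R: "R < 1" "0 \<le> R"
    proof -
      have "beta ^ i \<le> beta" using power_decreasing[of 1 i beta] False beta by simp
      moreover have "B * beta ^ i \<le> beta ^ i" using Bb beta by (simp add: mult_left_le_one_le)
      ultimately show "R < 1" unfolding R_def using beta by simp
      show "0 \<le> R" unfolding R_def using Bb beta by simp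
    qed
    have LS: "{1 .. i * b} \<subseteq> {1..n}"
    proof -
      have "i * b \<le> m * b" using i by simp
      then show ?thesis using nmb by auto
    qed
    have wl: "0 \<le> w i l \<and> (w i l)\<^sup>2 \<le> (1 - R) / (real b)\<^sup>2" if l: "l \<in> {1 .. i * b}" for l
    proof -
      have "l - 1 < i * b" using l by auto
      then have "(l - 1) div b < i" by (rule less_mult_imp_div_less)
      from coef_bounds[OF Bb beta(1) _ this] beta
      have c: "0 \<le> 1 - B * beta ^ (i - (l - 1) div b)" "1 - B * beta ^ (i - (l - 1) div b) \<le> 1 - R"
        unfolding R_def by auto
      have "(1 - B * beta ^ (i - (l - 1) div b))\<^sup>2 \<le> (1 - R)\<^sup>2" using c by (intro power_mono) auto
      also have "\<dots> \<le> 1 - R" using R by (simp add: power2_eq_square mult_left_le_one_le)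
      finally show ?thesis unfolding w_def using c b_pos by (simp add: power_divide divide_right_mono)
    qed
    have wsum: "(\<Sum>l = 1 .. i * b. (w i l)\<^sup>2) \<le> real i * (1 - R) / real b"
    proof -
      have "(\<Sum>l = 1 .. i * b. (w i l)\<^sup>2) \<le> (\<Sum>l = 1 .. i * b. (1 - R) / (real b)\<^sup>2)"
        by (intro sum_mono) (use wl in auto)
      also have "\<dots> = real i * (1 - R) / real b" using b_pos by (simp add: power2_eq_square)
      finally show ?thesis .
    qed
    have var: "real n * (\<Sum>p\<in>P. (norm (\<Sum>l = 1 .. i * b. w i l *\<^sub>R h (p l)))\<^sup>2)
       \<le> cP * (\<Sum>l = 1 .. i * b. (w i l)\<^sup>2) * (\<Sum>k = 1..n. (norm (h k))\<^sup>2)"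
      using perm_variance[of "{1..n}" "{1 .. i * b}" h "w i", OF _ LS h0] wl
      unfolding P_def cP_def by auto
    also have "\<dots> \<le> cP * (real i * (1 - R) / real b) * (\<Sum>k = 1..n. (norm (h k))\<^sup>2)"
      using cP0 wsum by (intro mult_right_mono mult_left_mono) (auto intro: sum_nonneg)
    finally have v2: "(\<Sum>p\<in>P. (norm (\<Sum>l = 1 .. i * b. w i l *\<^sub>R h (p l)))\<^sup>2) * real n
        \<le> cP * (real i * (1 - R) / real b) * (\<Sum>k = 1..n. (norm (h k))\<^sup>2)" by (simp add: mult.commute)
    have "(\<Sum>p\<in>P. (norm (\<Sum>l = 1 .. i * b. w i l *\<^sub>R h (p l)))\<^sup>2)
        \<le> cP * (real i * (1 - R) / real b) * (\<Sum>k = 1..n. (norm (h k))\<^sup>2) / real n"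
    proof -
      have np: "0 < real n" using n_pos by simp
      show ?thesis by (rule iffD2[OF pos_le_divide_eq[OF np] v2])
    qed
    also have "\<dots> = (1 - R) * (cP * (real i / real b) * sig)"
      unfolding sig_def by (simp add: field_simps)
    finally have "(\<Sum>p\<in>P. (norm (\<Sum>l = 1 .. i * b. w i l *\<^sub>R h (p l)))\<^sup>2) \<le> (1 - R) * (cP * (real i / real b) * sig)" .
    then have "(\<Sum>p\<in>P. (norm (\<Sum>l = 1 .. i * b. w i l *\<^sub>R h (p l)))\<^sup>2) / (1 - R) \<le> cP * (real i / real b) * sig"
      using R by (simp add: pos_divide_le_eq mult.commute)
    then show ?thesis unfolding Xi_def R_def[symmetric] by (simp add: sum_divide_distrib)
  qed
  have sig0: "0 \<le> sig" unfolding sig_def by (simp add: sum_nonneg)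
  have XiS: "(\<Sum>i<m. \<Sum>p\<in>P. Xi i p) \<le> cP * (real m)\<^sup>2 / 2 / real b * sig"
  proof -
    have "(\<Sum>i<m. \<Sum>p\<in>P. Xi i p) \<le> (\<Sum>i<m. cP * (real i / real b) * sig)"
      by (intro sum_mono Xi_sum) auto
    also have "\<dots> = (\<Sum>i<m. cP / real b * sig * real i)"
      by (rule sum.cong[OF refl]) simp
    also have "\<dots> = cP / real b * sig * (\<Sum>i<m. real i)"
      by (simp only: sum_distrib_left)
    also have "\<dots> \<le> cP / real b * sig * ((real m)\<^sup>2 / 2)"
      using cP0 sig0 b_pos by (intro mult_left_mono sum_lin_le) auto
    finally show ?thesis by (simp add: mult_ac)
  qed
  define Q0 where "Q0 = real m * (B * (norm (z - v0))\<^sup>2) + ta\<^sup>2 * (real m) ^ 3 * (norm gb)\<^sup>2"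
  have sumX: "(1 - kap) * (\<Sum>p\<in>P. X p) \<le> cP * (Q0 + 3 * (ta\<^sup>2 * L * (real m)\<^sup>2 * Dlt / real b))"
  proof -
    have "(1 - kap) * (\<Sum>p\<in>P. X p) = (\<Sum>p\<in>P. (1 - kap) * X p)" by (simp add: sum_distrib_left)
    also have "\<dots> \<le> (\<Sum>p\<in>P. Q0 + 3 * ta\<^sup>2 * (\<Sum>i<m. Xi i p))"
      by (intro sum_mono) (use pt in \<open>simp add: Q0_def\<close>)
    also have "\<dots> = cP * Q0 + 3 * ta\<^sup>2 * (\<Sum>i<m. \<Sum>p\<in>P. Xi i p)"
      unfolding cP_def by (simp add: sum.distrib sum_distrib_left sum.swap[of _ P])
    also have "\<dots> \<le> cP * Q0 + 3 * ta\<^sup>2 * (cP * (real m)\<^sup>2 / 2 / real b * sig)"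
      by (intro add_left_mono mult_left_mono XiS) simp
    also have "\<dots> \<le> cP * Q0 + 3 * ta\<^sup>2 * (cP * (real m)\<^sup>2 / 2 / real b * (2 * L * Dlt))"
      using cP0 b_pos by (intro add_left_mono mult_left_mono sig_le) auto
    also have "\<dots> = cP * (Q0 + 3 * (ta\<^sup>2 * L * (real m)\<^sup>2 * Dlt / real b))"
      by (simp add: algebra_simps)
    finally show ?thesis .
  qed
  have lhs: "(\<Sum>t = 1..n div b. measure_pmf.expectation (pmf_of_set {p. p permutes {1..n}})
            (\<lambda>p. (norm (rrm_yhat g b al beta lam p u0 v0 t - rrm_z beta u0 v0))\<^sup>2)) = (\<Sum>p\<in>P. X p) / cP"
  proof -
    have "(\<Sum>t = 1..n div b. measure_pmf.expectation (pmf_of_set {p. p permutes {1..n}})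
            (\<lambda>p. (norm (rrm_yhat g b al beta lam p u0 v0 t - rrm_z beta u0 v0))\<^sup>2))
        = (\<Sum>t = 1..m. (\<Sum>p\<in>P. F t p) / cP)"
      unfolding m_def[symmetric] z_def[symmetric] F_def[symmetric] P_def[symmetric]
      by (rule sum.cong[OF refl]) (simp add: integral_pmf_of_set[OF PneP finP] cP_def)
    also have "\<dots> = (\<Sum>p\<in>P. X p) / cP"
      unfolding X_def by (simp add: sum_divide_distrib[symmetric] sum.swap[of _ P])
    finally show ?thesis .
  qed
  have Dlt0: "0 \<le> Dlt"
  proof -
    have "real n * fbar \<le> (\<Sum>i = 1..n. fs i z)"
      using sum_mono[of "{1..n}" "\<lambda>i. fbar" "\<lambda>i. fs i z"] lower by simp
    then show ?thesis unfolding Dlt_def using n_pos by (simp add: field_simps)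
  qed
  have x0: "0 \<le> ta\<^sup>2 * L * (real m)\<^sup>2 * Dlt / real b" using Dlt0 L_pos by simp
  have y0: "0 \<le> real m * (B * (norm (z - v0))\<^sup>2)" using Bb by simp
  have w0: "0 \<le> ta\<^sup>2 * (real m) ^ 3 * (norm gb)\<^sup>2" by simp
  have main: "(\<Sum>p\<in>P. X p) / cP \<le> 5 / 4 * (real m * (B * (norm (z - v0))\<^sup>2)) + 5 / 4 * (ta\<^sup>2 * (real m) ^ 3 * (norm gb)\<^sup>2)
       + 15 / 4 * (ta\<^sup>2 * L * (real m)\<^sup>2 * Dlt / real b)"
    by (rule lin_aux3[OF x0 y0 w0 kap cP0]) (use sumX in \<open>simp add: Q0_def\<close>)
  have R: "5 / 4 * (real m * (B * (norm (z - v0))\<^sup>2)) + 5 / 4 * (ta\<^sup>2 * (real m) ^ 3 * (norm gb)\<^sup>2)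
       + 15 / 4 * (ta\<^sup>2 * L * (real m)\<^sup>2 * Dlt / real b)
     = 5 * real (n div b) / 4 *
           (rrm_B beta lam * (norm (rrm_z beta u0 v0 - v0))\<^sup>2
            + (real (n div b))\<^sup>2 * al\<^sup>2 / (1 - beta)\<^sup>2 * (norm ((1 / real n) *\<^sub>R (\<Sum>i = 1..n. g i (rrm_z beta u0 v0))))\<^sup>2
            + 3 * L * real (n div b) * al\<^sup>2 / (real b * (1 - beta)\<^sup>2) * ((1 / real n) * (\<Sum>i = 1..n. fs i (rrm_z beta u0 v0)) - fbar))"
  proof -
    have ne: "1 - beta \<noteq> 0" "real b \<noteq> 0" using beta b_pos by auto
    have e1: "(real m)\<^sup>2 * al\<^sup>2 / (1 - beta)\<^sup>2 = (real m)\<^sup>2 * ta\<^sup>2" unfolding ta_def by (simp add: power_divide)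
    have e2: "3 * L * real m * al\<^sup>2 / (real b * (1 - beta)\<^sup>2) = 3 * L * real m * ta\<^sup>2 / real b"
      unfolding ta_def by (simp add: power_divide)
    show ?thesis
      unfolding m_def[symmetric] B_def[symmetric] z_def[symmetric] gb_def[symmetric] Dlt_def[symmetric] e1 e2
      using ne by (simp add: power2_eq_square power3_eq_cube field_simps)
  qed
  show ?thesis unfolding lhs by (rule ord_le_eq_trans[OF main R])
qed


theorem lemmaB3:
  fixes fs :: "nat \<Rightarrow> 'a::euclidean_space \<Rightarrow> real"
    and g :: "nat \<Rightarrow> 'a \<Rightarrow> 'a"
    and n b :: nat
    and L fbar beta lam :: real
    and al :: "nat \<Rightarrow> real"
    and ps :: "nat \<Rightarrow> nat \<Rightarrow> nat"
    and x1 :: 'a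
  defines "m \<equiv> n div b"
      and "f \<equiv> (\<lambda>x. (1 / real n) * (\<Sum>i = 1..n. fs i x))"
      and "gradf \<equiv> (\<lambda>x. (1 / real n) *\<^sub>R (\<Sum>i = 1..n. g i x))"
      and "xt \<equiv> (\<lambda>k. fst (rrm_state g b (n div b) al beta lam ps x1 k))"
      and "x \<equiv> (\<lambda>k. snd (rrm_state g b (n div b) al beta lam ps x1 k))"
      and "z \<equiv> (\<lambda>k. rrm_z beta (fst (rrm_state g b (n div b) al beta lam ps x1 k))
                                  (snd (rrm_state g b (n div b) al beta lam ps x1 k)))"
  assumes n_pos: "0 < n" and b_pos: "0 < b" and b_dvd: "b dvd n"
    and deriv: "\<And>i y. i \<in> {1..n} \<Longrightarrow> (fs i has_derivative (\<lambda>h. g i y \<bullet> h)) (at y)"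
    and cont: "\<And>i. i \<in> {1..n} \<Longrightarrow> continuous_on UNIV (g i)"
    and L_pos: "0 < L"
    and lip: "\<And>i y w. i \<in> {1..n} \<Longrightarrow> norm (g i y - g i w) \<le> L * norm (y - w)"
    and lower: "\<And>i y. i \<in> {1..n} \<Longrightarrow> fbar \<le> fs i y"
    and beta: "0 \<le> beta" "beta < 1"
    and lam: "0 \<le> lam" "lam \<le> beta / (1 - beta)"
    and step: "\<And>k. 1 \<le> k \<Longrightarrow> 0 < al k \<and> al k \<le> (1 - beta) / (sqrt 8 * L * real m)"
    and perms: "\<And>k. 1 \<le> k \<Longrightarrow> ps k permutes {1..n}"
  shows
    "(\<forall>k\<ge>1.
        (\<Sum>t = 1..m. (norm (rrm_yhat g b (al k) beta lam (ps k) (xt k) (x k) t - z k))\<^sup>2)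
        \<le> 5 * real m / 4 *
           (rrm_B beta lam * (norm (z k - x k))\<^sup>2
            + (real m)\<^sup>2 * (al k)\<^sup>2 / (1 - beta)\<^sup>2 * (norm (gradf (z k)))\<^sup>2
            + 3 * L * (real m)\<^sup>2 * (al k)\<^sup>2 / (1 - beta)\<^sup>2 * (f (z k) - fbar)))
     \<and>
     (\<forall>k\<ge>1.
        (\<Sum>t = 1..m. measure_pmf.expectation (pmf_of_set {p. p permutes {1..n}})
            (\<lambda>p. (norm (rrm_yhat g b (al k) beta lam p (xt k) (x k) t - z k))\<^sup>2))
        \<le> 5 * real m / 4 *
           (rrm_B beta lam * (norm (z k - x k))\<^sup>2
            + (real m)\<^sup>2 * (al k)\<^sup>2 / (1 - beta)\<^sup>2 * (norm (gradf (z k)))\<^sup>2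
            + 3 * L * real m * (al k)\<^sup>2 / (real b * (1 - beta)\<^sup>2) * (f (z k) - fbar)))"
  proof (intro conjI allI impI)
  fix k :: nat assume k: "1 \<le> k"
  have s: "0 < al k" "al k \<le> (1 - beta) / (sqrt 8 * L * real (n div b))" using step[OF k] unfolding m_def by auto
  show "(\<Sum>t = 1..m. (norm (rrm_yhat g b (al k) beta lam (ps k) (xt k) (x k) t - z k))\<^sup>2)
        \<le> 5 * real m / 4 *
           (rrm_B beta lam * (norm (z k - x k))\<^sup>2
            + (real m)\<^sup>2 * (al k)\<^sup>2 / (1 - beta)\<^sup>2 * (norm (gradf (z k)))\<^sup>2
            + 3 * L * (real m)\<^sup>2 * (al k)\<^sup>2 / (1 - beta)\<^sup>2 * (f (z k) - fbar))"
    unfolding m_def f_def gradf_def z_def x_def xt_def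
    by (rule main_a[OF n_pos b_pos b_dvd deriv L_pos lip lower beta lam s perms[OF k]])
next
  fix k :: nat assume k: "1 \<le> k"
  have s: "0 < al k" "al k \<le> (1 - beta) / (sqrt 8 * L * real (n div b))" using step[OF k] unfolding m_def by auto
  show "(\<Sum>t = 1..m. measure_pmf.expectation (pmf_of_set {p. p permutes {1..n}})
            (\<lambda>p. (norm (rrm_yhat g b (al k) beta lam p (xt k) (x k) t - z k))\<^sup>2))
        \<le> 5 * real m / 4 *
           (rrm_B beta lam * (norm (z k - x k))\<^sup>2
            + (real m)\<^sup>2 * (al k)\<^sup>2 / (1 - beta)\<^sup>2 * (norm (gradf (z k)))\<^sup>2
            + 3 * L * real m * (al k)\<^sup>2 / (real b * (1 - beta)\<^sup>2) * (f (z k) - fbar))"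
    unfolding m_def f_def gradf_def z_def x_def xt_def
    by (rule main_b[OF n_pos b_pos b_dvd deriv L_pos lip lower beta lam s])
qed

end
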